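(* Let $n_1,n_2,n_3\in\mathbb{N}$, let $\sigma$ be a segment label map on $G=\{1,\dots,n_1\}\times\{1,\dots,n_2\}\times\{1,\dots,n_3\}$, fix any decomposition of $T$ into blocks, let $\tau=\mathrm{LABEL}(\sigma,T)$ and let $\tau'$ be the output of the block-wise method. Then for all 0-cells $t\in T$: $\tau(t)\neq0\Rightarrow\tau'(t)\neq0$.
   Context: Voxel grid and segmentation: $G=\{1,\dots,n_1\}\times\{1,\dots,n_2\}\times\{1,\dots,n_3\}$; voxels $v,w$ are adjacent iff $\sum_i|v_i-w_i|=1$. A segment label map is $\sigma:G\to\mathbb{N}=\{1,2,\dots\}$ such that each level set $\sigma^{-1}(l)$ is connected w.r.t. this adjacency. Topological grid: $T=\{1,\dots,2n_1-1\}\times\{1,\dots,2n_2-1\}\times\{1,\dots,2n_3-1\}$; a cell with exactly $j$ odd coordinates is a $j$-cell. Voxel $r$ corresponds to the 3-cell $2r-1$. Two cells are 6-neighbors if they differ by $1$ in exactly one coordinate. For a $j$-cell $t$, $\Gamma(t)$ is the set of 6-neighbors of $t$ in $T$ that are $(j+1)$-cells. Cells $t_1,t_2$ are connected, $t_1\leftrightarrow t_2$, iff there is $t\in T$ with $t_1,t_2\in\Gamma(t)$. Procedure LABEL: for a voxel box $\prod_i\{a_i,\dots,b_i\}\subseteq G$ let $B=\prod_i\{2a_i-1,\dots,2b_i-1\}$ be its cell box. $\mathrm{LABEL}(\sigma,B)$ produces $\lambda:B\to\mathbb{N}_0$: (1) $\lambda(2r-1)=\sigma(r)$ for 3-cells.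 (2) For $j=2,1,0$ in this order: for each $j$-cell $t\in B$ let $\theta(t)$ be the set of positive integers occurring exactly once in $(\lambda(s))_{s\in\Gamma(t)}$; $t$ is active iff $\theta(t)\ne\emptyset$, inactive $j$-cells get label $0$; the active $j$-cells of $B$ are partitioned into maximal sets of cells with equal $\theta$ that are connected by $\leftrightarrow$-paths inside the set; these classes are numbered $1,\dots,m_j(B)$ arbitrarily and each active $j$-cell gets its class number. Reference labeling: $\tau=\mathrm{LABEL}(\sigma,T)$. Block-wise method: for each axis $i$ choose odd integers $1=a^i_0<\dots<a^i_{m_i}=2n_i-1$; blocks are the boxes $\prod_i\{a^i_{k_i-1},\dots,a^i_{k_i}\}$. Step 1: $\lambda_B=\mathrm{LABEL}(\sigma,B)$ for each block. Step 2: with blocks ordered $B_1,\dots,B_K$, add offset $\sum_{k'<k}m_j(B_{k'})$ to each positive $j$-cell label of $\lambda_{B_k}$ ($j\in\{0,1,2\}$). Step 3: for $j\in\{1,2\}$, via union–find, unite the labels received in different blocks by any active $j$-cell lying in several blocks, and replace every positive $j$-cell label by its set representative. Step 4: for each 0-cell $t_0$ and each pair of distinct 1-cell labels occurring exactly once among the current labels of $\Gamma(t_0)$, merge the two labels if the corresponding 1-cells bound the same set of current 2-cell labels; if any merge took place at $t_0$, recompute the activity of $t_0$ and set its label to $0$ if inactive. The result is $\tau':T\to\mathbb{N}_0$. *)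

theory Defs
  imports Main
begin

type_synonym cell = "nat \<times> nat \<times> nat"

text \<open>Number of odd coordinates: a cell with j odd coordinates is a j-cell.\<close>
definition odd_count :: "cell \<Rightarrow> nat" where
  "odd_count t = (case t of (x, y, z) \<Rightarrow>
     (if odd x then 1 else 0) + (if odd y then 1 else 0) + (if odd z then 1 else 0))"

definition nbr1 :: "nat \<Rightarrow> nat \<Rightarrow> bool" where
  "nbr1 a b \<longleftrightarrow> a = b + 1 \<or> b = a + 1"

definition six_nbr :: "cell \<Rightarrow> cell \<Rightarrow> bool" where
  "six_nbr s t \<longleftrightarrow> (case s of (x, y, z) \<Rightarrow> case t of (x', y', z') \<Rightarrow>
      (nbr1 x x' \<and> y = y' \<and> z = z') \<or> (x = x' \<and> nbr1 y y' \<and> z = z') \<or>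
      (x = x' \<and> y = y' \<and> nbr1 z z'))"

definition Vgrid :: "nat \<Rightarrow> nat \<Rightarrow> nat \<Rightarrow> cell set" where
  "Vgrid n1 n2 n3 = {1..n1} \<times> {1..n2} \<times> {1..n3}"

definition Tgrid :: "nat \<Rightarrow> nat \<Rightarrow> nat \<Rightarrow> cell set" where
  "Tgrid n1 n2 n3 = {1..2*n1-1} \<times> {1..2*n2-1} \<times> {1..2*n3-1}"

definition Gamma :: "cell set \<Rightarrow> cell \<Rightarrow> cell set" where
  "Gamma TT t = {s \<in> TT. six_nbr t s \<and> odd_count s = odd_count t + 1}"

definition connected_cells :: "cell set \<Rightarrow> cell \<Rightarrow> cell \<Rightarrow> bool" where
  "connected_cells TT t1 t2 \<longleftrightarrow> (\<exists>t\<in>TT. t1 \<in> Gamma TT t \<and> t2 \<in> Gamma TT t)"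

definition theta :: "cell set \<Rightarrow> (cell \<Rightarrow> nat) \<Rightarrow> cell \<Rightarrow> nat set" where
  "theta TT lam t = {l. 0 < l \<and> card {s \<in> Gamma TT t. lam s = l} = 1}"

text \<open>Voxel r corresponds to the 3-cell 2r-1.\<close>
definition voxel_of :: "cell \<Rightarrow> cell" where
  "voxel_of t = (case t of (x, y, z) \<Rightarrow> ((x + 1) div 2, (y + 1) div 2, (z + 1) div 2))"

definition segment_label_map :: "nat \<Rightarrow> nat \<Rightarrow> nat \<Rightarrow> (cell \<Rightarrow> nat) \<Rightarrow> bool" where
  "segment_label_map n1 n2 n3 \<sigma> \<longleftrightarrow>
     (\<forall>r\<in>Vgrid n1 n2 n3. 0 < \<sigma> r) \<and>
     (\<forall>r\<in>Vgrid n1 n2 n3. \<forall>r'\<in>Vgrid n1 n2 n3. \<sigma> r = \<sigma> r' \<longrightarrow>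
        (r, r') \<in> {(v, w). v \<in> Vgrid n1 n2 n3 \<and> w \<in> Vgrid n1 n2 n3 \<and>
                          \<sigma> v = \<sigma> r \<and> \<sigma> w = \<sigma> r \<and> six_nbr v w}\<^sup>*)"

definition cls_rel :: "cell set \<Rightarrow> cell set \<Rightarrow> (cell \<Rightarrow> nat) \<Rightarrow> nat \<Rightarrow> cell rel" where
  "cls_rel TT B lam j = {(s, s'). s \<in> B \<and> s' \<in> B \<and> odd_count s = j \<and> odd_count s' = j \<and>
      theta TT lam s \<noteq> {} \<and> theta TT lam s = theta TT lam s' \<and> connected_cells TT s s'}"

text \<open>lam is a possible result of LABEL(sigma, B) (B a cell box inside the grid TT), with
  m j = m_j(B) the number of classes of active j-cells. Values outside B are fixed to 0.\<close>
definition is_LABEL :: "cell set \<Rightarrow> (cell \<Rightarrow> nat) \<Rightarrow> cell set \<Rightarrow> (cell \<Rightarrow> nat) \<Rightarrow> (nat \<Rightarrow> nat) \<Rightarrow> bool" where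
  "is_LABEL TT \<sigma> B lam m \<longleftrightarrow>
     (\<forall>t. t \<notin> B \<longrightarrow> lam t = 0) \<and>
     (\<forall>t\<in>B. odd_count t = 3 \<longrightarrow> lam t = \<sigma> (voxel_of t)) \<and>
     (\<forall>j<3. \<forall>t\<in>B. odd_count t = j \<longrightarrow> (lam t = 0 \<longleftrightarrow> theta TT lam t = {})) \<and>
     (\<forall>j<3. lam ` {t \<in> B. odd_count t = j \<and> theta TT lam t \<noteq> {}} = {1..m j}) \<and>
     (\<forall>j<3. \<forall>t1\<in>B. \<forall>t2\<in>B. odd_count t1 = j \<longrightarrow> odd_count t2 = j \<longrightarrow>
        theta TT lam t1 \<noteq> {} \<longrightarrow> theta TT lam t2 \<noteq> {} \<longrightarrow>
        (lam t1 = lam t2 \<longleftrightarrow> (t1, t2) \<in> (cls_rel TT B lam j)\<^sup>*))"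

definition valid_axis :: "nat \<Rightarrow> nat list \<Rightarrow> bool" where
  "valid_axis n xs \<longleftrightarrow> xs \<noteq> [] \<and> hd xs = 1 \<and> last xs = 2*n-1 \<and>
     sorted_wrt (<) xs \<and> (\<forall>x\<in>set xs. odd x)"

definition block_indices :: "nat list \<Rightarrow> nat list \<Rightarrow> nat list \<Rightarrow> cell set" where
  "block_indices a1 a2 a3 = {1..<length a1} \<times> {1..<length a2} \<times> {1..<length a3}"

definition blk :: "nat list \<Rightarrow> nat list \<Rightarrow> nat list \<Rightarrow> cell \<Rightarrow> cell set" where
  "blk a1 a2 a3 k = (case k of (k1, k2, k3) \<Rightarrow>
     {a1!(k1-1)..a1!k1} \<times> {a2!(k2-1)..a2!k2} \<times> {a3!(k3-1)..a3!k3})"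

definition merge_pairs :: "cell set \<Rightarrow> (cell \<Rightarrow> nat) \<Rightarrow> cell \<Rightarrow> nat rel" where
  "merge_pairs TT c t0 = {(c e, c e') | e e'. e \<in> Gamma TT t0 \<and> e' \<in> Gamma TT t0 \<and>
      c e \<in> theta TT c t0 \<and> c e' \<in> theta TT c t0 \<and> c e \<noteq> c e' \<and>
      c ` Gamma TT e = c ` Gamma TT e'}"

text \<open>Transition of the current labelling c to c' when processing the 0-cell t0:
  merged labels are replaced (globally on 1-cells) by a union-find representative rho;
  if a merge took place, t0 gets label 0 when it has become inactive.\<close>
definition step4_at :: "cell set \<Rightarrow> (cell \<Rightarrow> nat) \<Rightarrow> (cell \<Rightarrow> nat) \<Rightarrow> cell \<Rightarrow> bool" where
  "step4_at TT c c' t0 \<longleftrightarrow>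
     (\<exists>\<rho> :: nat \<Rightarrow> nat.
        (\<forall>l l'. \<rho> l = \<rho> l' \<longleftrightarrow> (l, l') \<in> (merge_pairs TT c t0)\<^sup>*) \<and>
        (\<forall>l. (l, \<rho> l) \<in> (merge_pairs TT c t0)\<^sup>*) \<and>
        (let c1 = (\<lambda>t. if odd_count t = 1 then \<rho> (c t) else c t) in
         c' = (\<lambda>t. if t = t0 \<and> merge_pairs TT c t0 \<noteq> {} \<and> theta TT c1 t0 = {} then 0
                   else c1 t)))"

definition blockwise_output ::
  "nat \<Rightarrow> nat \<Rightarrow> nat \<Rightarrow> (cell \<Rightarrow> nat) \<Rightarrow> nat list \<Rightarrow> nat list \<Rightarrow> nat list \<Rightarrow> (cell \<Rightarrow> nat) \<Rightarrow> bool" where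
  "blockwise_output n1 n2 n3 \<sigma> a1 a2 a3 \<tau>' \<longleftrightarrow>
   (let TT = Tgrid n1 n2 n3; BI = block_indices a1 a2 a3; K = card BI in
   \<exists>(ord :: nat \<Rightarrow> cell) (lamB :: cell \<Rightarrow> cell \<Rightarrow> nat) (mB :: cell \<Rightarrow> nat \<Rightarrow> nat)
     (rep :: nat \<Rightarrow> nat \<Rightarrow> nat) (lab :: cell \<Rightarrow> nat) (ts :: cell list)
     (cs :: nat \<Rightarrow> cell \<Rightarrow> nat).
     \<comment> \<open>blocks ordered B_1..B_K\<close>
     bij_betw ord {..<K} BI \<and>
     \<comment> \<open>Step 1\<close>
     (\<forall>k\<in>BI. is_LABEL TT \<sigma> (blk a1 a2 a3 k) (lamB k) (mB k)) \<and>
     \<comment> \<open>Step 2: offset labels g i t of cell t in block number i\<close>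
     (let off = (\<lambda>j i. \<Sum>i'<i. mB (ord i') j);
          g = (\<lambda>i t. if lamB (ord i) t = 0 then 0 else lamB (ord i) t + off (odd_count t) i);
          \<comment> \<open>Step 3: labels received by the same active j-cell in different blocks\<close>
          U = (\<lambda>j. {(g i t, g i' t) | i i' t. i < K \<and> i' < K \<and>
                   t \<in> blk a1 a2 a3 (ord i) \<and> t \<in> blk a1 a2 a3 (ord i') \<and> odd_count t = j \<and>
                   lamB (ord i) t \<noteq> 0 \<and> lamB (ord i') t \<noteq> 0})
      in
      (\<forall>j\<in>{1,2}. (\<forall>l l'. rep j l = rep j l' \<longleftrightarrow> (l, l') \<in> (U j)\<^sup>*) \<and>
                  (\<forall>l. (l, rep j l) \<in> (U j)\<^sup>*)) \<and>
      (\<forall>t. t \<notin> TT \<longrightarrow> lab t = 0) \<and>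
      (\<forall>t\<in>TT. odd_count t = 3 \<longrightarrow> lab t = \<sigma> (voxel_of t)) \<and>
      (\<forall>t\<in>TT. odd_count t = 0 \<longrightarrow>
          (\<exists>i<K. t \<in> blk a1 a2 a3 (ord i) \<and> lab t = g i t)) \<and>
      (\<forall>t\<in>TT. odd_count t \<in> {1,2} \<longrightarrow>
          (\<exists>i<K. t \<in> blk a1 a2 a3 (ord i) \<and> lab t = rep (odd_count t) (g i t)))) \<and>
     \<comment> \<open>Step 4: 0-cells processed one after the other in an arbitrary order\<close>
     distinct ts \<and> set ts = {t \<in> TT. odd_count t = 0} \<and>
     cs 0 = lab \<and>
     (\<forall>i < length ts. step4_at TT (cs i) (cs (Suc i)) (ts ! i)) \<and>
     \<tau>' = cs (length ts))"

end

theory Submission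
  imports Defs
begin



lemma odd_count_simp: "odd_count (x,y,z) = (if odd x then 1 else 0) + (if odd y then 1 else 0) + (if odd z then 1 else 0)"
  by (simp add: odd_count_def)

lemma nbr_par: "nbr1 a b \<Longrightarrow> (if odd b then 1 else 0) + p = (if odd a then 1 else 0) + p + (1::nat) \<Longrightarrow> even a \<and> odd b"
  by (auto simp: nbr1_def split: if_splits)

lemma nbr_box: "nbr1 a b \<Longrightarrow> even a \<Longrightarrow> l \<le> a \<Longrightarrow> a \<le> h \<Longrightarrow> odd l \<Longrightarrow> odd (h::nat) \<Longrightarrow> l \<le> b \<and> b \<le> h"
  unfolding nbr1_def by presburger

lemma Gamma_cases:
  assumes "(x',y',z') \<in> Gamma TT (x,y,z)"
  shows "(x',y',z') \<in> TT \<and> ((nbr1 x x' \<and> even x \<and> odd x' \<and> y'=y \<and> z'=z) \<or> (nbr1 y y' \<and> even y \<and> odd y' \<and> x'=x \<and> z'=z)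
     \<or> (nbr1 z z' \<and> even z \<and> odd z' \<and> x'=x \<and> y'=y))"
proof -
  have s: "six_nbr (x,y,z) (x',y',z')" and o: "odd_count (x',y',z') = odd_count (x,y,z) + 1" and "(x',y',z') \<in> TT"
    using assms by (auto simp: Gamma_def)
  from s have "(nbr1 x x' \<and> y = y' \<and> z = z') \<or> (x = x' \<and> nbr1 y y' \<and> z = z') \<or> (x = x' \<and> y = y' \<and> nbr1 z z')"
    by (simp add: six_nbr_def)
  then show ?thesis
  proof (elim disjE conjE)
    assume h: "nbr1 x x'" "y = y'" "z = z'"
    with o have "even x \<and> odd x'" by (intro nbr_par[of x x' "(if odd y then 1 else 0) + (if odd z then 1 else 0)"]) (auto simp: odd_count_simp)
    with h \<open>_ \<in> TT\<close> show ?thesis by auto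
  next
    assume h: "x = x'" "nbr1 y y'" "z = z'"
    with o have "even y \<and> odd y'" by (intro nbr_par[of y y' "(if odd x then 1 else 0) + (if odd z then 1 else 0)"]) (auto simp: odd_count_simp)
    with h \<open>_ \<in> TT\<close> show ?thesis by auto
  next
    assume h: "x = x'" "y = y'" "nbr1 z z'"
    with o have "even z \<and> odd z'" by (intro nbr_par[of z z' "(if odd x then 1 else 0) + (if odd y then 1 else 0)"]) (auto simp: odd_count_simp)
    with h \<open>_ \<in> TT\<close> show ?thesis by auto
  qed
qed

lemma Gamma_box:
  assumes "s \<in> {l1..h1}\<times>{l2..h2}\<times>{l3..h3}" "odd l1" "odd h1" "odd l2" "odd h2" "odd l3" "odd h3"
    "s' \<in> Gamma TT s"
  shows "s' \<in> {l1..h1}\<times>{l2..h2}\<times>{l3..h3}"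
proof -
  obtain x y z x' y' z' where e: "s = (x,y,z)" "s' = (x',y',z')" by (cases s, cases s') auto
  show ?thesis using Gamma_cases[of x' y' z' TT x y z] assms e nbr_box[of x x' l1 h1] nbr_box[of y y' l2 h2] nbr_box[of z z' l3 h3]
    by auto
qed

lemma Tgrid_box: "Tgrid n1 n2 n3 = {1..2*n1-1}\<times>{1..2*n2-1}\<times>{1..2*n3-1}" by (simp add: Tgrid_def)

lemma Gamma_eq:
  assumes "(x,y,z) \<in> Tgrid n1 n2 n3"
  shows "Gamma (Tgrid n1 n2 n3) (x,y,z) =
     (if even x then {(x+1,y,z),(x-1,y,z)} else {}) \<union>
     (if even y then {(x,y+1,z),(x,y-1,z)} else {}) \<union>
     (if even z then {(x,y,z+1),(x,y,z-1)} else {})" (is "?L = ?R")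
proof
  show "?L \<subseteq> ?R"
  proof
    fix s' assume "s' \<in> ?L"
    then obtain x' y' z' where e: "s' = (x',y',z')" "(x',y',z') \<in> ?L" by (cases s') auto
    show "s' \<in> ?R" using Gamma_cases[OF e(2)] e(1) unfolding nbr1_def by auto
  qed
next
  have b: "\<And>a n. a \<in> {1..2*n-1} \<Longrightarrow> even a \<Longrightarrow> a+1 \<in> {1..2*n-1} \<and> a - 1 \<in> {1..2*n-1::nat}"
    by (simp, presburger)
  show "?R \<subseteq> ?L"
    using assms b[of x n1] b[of y n2] b[of z n3]
    by (auto simp: Gamma_def six_nbr_def nbr1_def odd_count_simp Tgrid_box)
qed

lemma Gamma_in: "s \<in> Gamma TT e \<Longrightarrow> s \<in> TT \<and> odd_count s = odd_count e + 1"
  by (simp add: Gamma_def)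

lemma cell1_x:
  assumes "(x,y,z) \<in> Tgrid n1 n2 n3" "odd x" "even y" "even z"
  shows "\<exists>s1 s2 s3 s4 ua ub uc ud. Gamma (Tgrid n1 n2 n3) (x,y,z) = {s1,s2,s3,s4} \<and> distinct [s1,s2,s3,s4] \<and>
    Gamma (Tgrid n1 n2 n3) s1 = {ua,ub} \<and> Gamma (Tgrid n1 n2 n3) s2 = {uc,ud} \<and>
    Gamma (Tgrid n1 n2 n3) s3 = {ua,uc} \<and> Gamma (Tgrid n1 n2 n3) s4 = {ub,ud} \<and>
    ua \<noteq> ub \<and> uc \<noteq> ud \<and> ua \<noteq> uc \<and> ub \<noteq> ud"
proof -
  let ?T = "Tgrid n1 n2 n3"
  have G: "Gamma ?T (x,y,z) = {(x,y+1,z),(x,y-1,z),(x,y,z+1),(x,y,z-1)}"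
    using Gamma_eq[OF assms(1)] assms by auto
  have yz: "y \<ge> 2" "z \<ge> 2" using assms by (auto simp: Tgrid_def; presburger)+
  have m: "(x,y+1,z) \<in> ?T" "(x,y-1,z) \<in> ?T" "(x,y,z+1) \<in> ?T" "(x,y,z-1) \<in> ?T"
    using G Gamma_in by blast+
  show ?thesis
    apply (rule exI[of _ "(x,y+1,z)"], rule exI[of _ "(x,y-1,z)"], rule exI[of _ "(x,y,z+1)"], rule exI[of _ "(x,y,z-1)"])
    apply (rule exI[of _ "(x,y+1,z+1)"], rule exI[of _ "(x,y+1,z-1)"], rule exI[of _ "(x,y-1,z+1)"], rule exI[of _ "(x,y-1,z-1)"])
    using G yz assms Gamma_eq[OF m(1)] Gamma_eq[OF m(2)] Gamma_eq[OF m(3)] Gamma_eq[OF m(4)]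
    by auto
qed

lemma cell1_y:
  assumes "(x,y,z) \<in> Tgrid n1 n2 n3" "even x" "odd y" "even z"
  shows "\<exists>s1 s2 s3 s4 ua ub uc ud. Gamma (Tgrid n1 n2 n3) (x,y,z) = {s1,s2,s3,s4} \<and> distinct [s1,s2,s3,s4] \<and>
    Gamma (Tgrid n1 n2 n3) s1 = {ua,ub} \<and> Gamma (Tgrid n1 n2 n3) s2 = {uc,ud} \<and>
    Gamma (Tgrid n1 n2 n3) s3 = {ua,uc} \<and> Gamma (Tgrid n1 n2 n3) s4 = {ub,ud} \<and>
    ua \<noteq> ub \<and> uc \<noteq> ud \<and> ua \<noteq> uc \<and> ub \<noteq> ud"
proof -
  let ?T = "Tgrid n1 n2 n3"
  have G: "Gamma ?T (x,y,z) = {(x+1,y,z),(x-1,y,z),(x,y,z+1),(x,y,z-1)}"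
    using Gamma_eq[OF assms(1)] assms by auto
  have yz: "x \<ge> 2" "z \<ge> 2" using assms by (auto simp: Tgrid_def; presburger)+
  have m: "(x+1,y,z) \<in> ?T" "(x-1,y,z) \<in> ?T" "(x,y,z+1) \<in> ?T" "(x,y,z-1) \<in> ?T"
    using G Gamma_in by blast+
  show ?thesis
    apply (rule exI[of _ "(x+1,y,z)"], rule exI[of _ "(x-1,y,z)"], rule exI[of _ "(x,y,z+1)"], rule exI[of _ "(x,y,z-1)"])
    apply (rule exI[of _ "(x+1,y,z+1)"], rule exI[of _ "(x+1,y,z-1)"], rule exI[of _ "(x-1,y,z+1)"], rule exI[of _ "(x-1,y,z-1)"])
    using G yz assms Gamma_eq[OF m(1)] Gamma_eq[OF m(2)] Gamma_eq[OF m(3)] Gamma_eq[OF m(4)]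
    by auto
qed

lemma cell1_z:
  assumes "(x,y,z) \<in> Tgrid n1 n2 n3" "even x" "even y" "odd z"
  shows "\<exists>s1 s2 s3 s4 ua ub uc ud. Gamma (Tgrid n1 n2 n3) (x,y,z) = {s1,s2,s3,s4} \<and> distinct [s1,s2,s3,s4] \<and>
    Gamma (Tgrid n1 n2 n3) s1 = {ua,ub} \<and> Gamma (Tgrid n1 n2 n3) s2 = {uc,ud} \<and>
    Gamma (Tgrid n1 n2 n3) s3 = {ua,uc} \<and> Gamma (Tgrid n1 n2 n3) s4 = {ub,ud} \<and>
    ua \<noteq> ub \<and> uc \<noteq> ud \<and> ua \<noteq> uc \<and> ub \<noteq> ud"
proof -
  let ?T = "Tgrid n1 n2 n3"
  have G: "Gamma ?T (x,y,z) = {(x+1,y,z),(x-1,y,z),(x,y+1,z),(x,y-1,z)}"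
    using Gamma_eq[OF assms(1)] assms by auto
  have yz: "x \<ge> 2" "y \<ge> 2" using assms by (auto simp: Tgrid_def; presburger)+
  have m: "(x+1,y,z) \<in> ?T" "(x-1,y,z) \<in> ?T" "(x,y+1,z) \<in> ?T" "(x,y-1,z) \<in> ?T"
    using G Gamma_in by blast+
  show ?thesis
    apply (rule exI[of _ "(x+1,y,z)"], rule exI[of _ "(x-1,y,z)"], rule exI[of _ "(x,y+1,z)"], rule exI[of _ "(x,y-1,z)"])
    apply (rule exI[of _ "(x+1,y+1,z)"], rule exI[of _ "(x+1,y-1,z)"], rule exI[of _ "(x-1,y+1,z)"], rule exI[of _ "(x-1,y-1,z)"])
    using G yz assms Gamma_eq[OF m(1)] Gamma_eq[OF m(2)] Gamma_eq[OF m(3)] Gamma_eq[OF m(4)]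
    by auto
qed

lemma cell1:
  assumes "e \<in> Tgrid n1 n2 n3" "odd_count e = 1"
  shows "\<exists>s1 s2 s3 s4 ua ub uc ud. Gamma (Tgrid n1 n2 n3) e = {s1,s2,s3,s4} \<and> distinct [s1,s2,s3,s4] \<and>
    Gamma (Tgrid n1 n2 n3) s1 = {ua,ub} \<and> Gamma (Tgrid n1 n2 n3) s2 = {uc,ud} \<and>
    Gamma (Tgrid n1 n2 n3) s3 = {ua,uc} \<and> Gamma (Tgrid n1 n2 n3) s4 = {ub,ud} \<and>
    ua \<noteq> ub \<and> uc \<noteq> ud \<and> ua \<noteq> uc \<and> ub \<noteq> ud"
proof -
  obtain x y z where e: "e = (x,y,z)" by (cases e) auto
  have "(odd x \<and> even y \<and> even z) \<or> (even x \<and> odd y \<and> even z) \<or> (even x \<and> even y \<and> odd z)"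
    using assms(2) unfolding e odd_count_simp by (auto split: if_splits)
  then show ?thesis
  proof (elim disjE conjE)
  qed (use cell1_x[of x y z n1 n2 n3] cell1_y[of x y z n1 n2 n3] cell1_z[of x y z n1 n2 n3] assms(1) e in simp_all)
qed



definition key :: "nat \<Rightarrow> nat \<Rightarrow> nat set" where "key a b = (if a = b then {} else {a,b})"

definition uniq4 :: "'a \<Rightarrow> 'a \<Rightarrow> 'a \<Rightarrow> 'a \<Rightarrow> 'a \<Rightarrow> bool" where
  "uniq4 x k1 k2 k3 k4 = ((x = k1 \<and> x \<noteq> k2 \<and> x \<noteq> k3 \<and> x \<noteq> k4) \<or> (x \<noteq> k1 \<and> x = k2 \<and> x \<noteq> k3 \<and> x \<noteq> k4)
     \<or> (x \<noteq> k1 \<and> x \<noteq> k2 \<and> x = k3 \<and> x \<noteq> k4) \<or> (x \<noteq> k1 \<and> x \<noteq> k2 \<and> x \<noteq> k3 \<and> x = k4))"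

lemma card4:
  assumes "distinct [s1,s2,s3,s4]"
  shows "(card {s\<in>{s1,s2,s3,s4}. f s = x} = 1) = uniq4 x (f s1) (f s2) (f s3) (f s4)"
proof -
  have e: "{s\<in>{s1,s2,s3,s4}. f s = x} = (if f s1 = x then {s1} else {}) \<union> (if f s2 = x then {s2} else {})
     \<union> (if f s3 = x then {s3} else {}) \<union> (if f s4 = x then {s4} else {})" by auto
  show ?thesis unfolding e uniq4_def using assms
    by (cases "f s1 = x"; cases "f s2 = x"; cases "f s3 = x"; cases "f s4 = x") (auto simp: card_insert_if)
qed

lemma card2:
  assumes "u \<noteq> v"
  shows "(card {s\<in>{u,v}. f s = x} = 1) = ((f u = x) \<noteq> (f v = x))"
proof -
  have e: "{s\<in>{u,v}. f s = x} = (if f u = x then {u} else {}) \<union> (if f v = x then {v} else {})" by auto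
  show ?thesis unfolding e using assms by (cases "f u = x"; cases "f v = x") auto
qed

lemma theta2:
  assumes "Gamma TT s = {u,v}" "u \<noteq> v" "lam u > 0" "lam v > 0"
  shows "theta TT lam s = key (lam u) (lam v)"
  unfolding theta_def assms(1) card2[OF assms(2)] key_def using assms(3,4) by auto

lemma key_eq: "(key a b = key c d) = ((a=b \<and> c=d) \<or> (a\<noteq>b \<and> c\<noteq>d \<and> ((a=c\<and>b=d)\<or>(a=d\<and>b=c))))"
  unfolding key_def by (auto simp: doubleton_eq_iff)

lemma key_empty: "(key a b = {}) = (a = b)" unfolding key_def by auto

lemma comb_core:
  assumes "uniq4 (key a b) (key a b) (key c d) (key a c) (key b d) \<and> key a b \<noteq> {} \<or>
           uniq4 (key c d) (key a b) (key c d) (key a c) (key b d) \<and> key c d \<noteq> {} \<or>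
           uniq4 (key a c) (key a b) (key c d) (key a c) (key b d) \<and> key a c \<noteq> {} \<or>
           uniq4 (key b d) (key a b) (key c d) (key a c) (key b d) \<and> key b d \<noteq> {}"
  shows "(key a b \<noteq> {} \<longrightarrow> uniq4 (key a b) (key a b) (key c d) (key a c) (key b d)) \<and>
         (key c d \<noteq> {} \<longrightarrow> uniq4 (key c d) (key a b) (key c d) (key a c) (key b d)) \<and>
         (key a c \<noteq> {} \<longrightarrow> uniq4 (key a c) (key a b) (key c d) (key a c) (key b d)) \<and>
         (key b d \<noteq> {} \<longrightarrow> uniq4 (key b d) (key a b) (key c d) (key a c) (key b d))"
  using assms unfolding uniq4_def key_eq key_empty
  by smt

definition UK :: "nat \<Rightarrow> nat \<Rightarrow> nat \<Rightarrow> nat \<Rightarrow> bool" where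
  "UK a b c d = (uniq4 (key a b) (key a b) (key c d) (key a c) (key b d) \<and> key a b \<noteq> {} \<or>
           uniq4 (key c d) (key a b) (key c d) (key a c) (key b d) \<and> key c d \<noteq> {} \<or>
           uniq4 (key a c) (key a b) (key c d) (key a c) (key b d) \<and> key a c \<noteq> {} \<or>
           uniq4 (key b d) (key a b) (key c d) (key a c) (key b d) \<and> key b d \<noteq> {})"

lemma ex_uniq4: "(\<exists>x. 0 < x \<and> uniq4 x l1 l2 l3 l4) = (0<l1 \<and> uniq4 l1 l1 l2 l3 l4 \<or> 0<l2 \<and> uniq4 l2 l1 l2 l3 l4 \<or> 0<l3 \<and> uniq4 l3 l1 l2 l3 l4 \<or> 0<(l4::nat) \<and> uniq4 l4 l1 l2 l3 l4)"
proof
  assume "\<exists>x. 0 < x \<and> uniq4 x l1 l2 l3 l4"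
  then obtain x where "0 < x" "uniq4 x l1 l2 l3 l4" by blast
  moreover have "x = l1 \<or> x = l2 \<or> x = l3 \<or> x = l4" using calculation(2) unfolding uniq4_def by blast
  ultimately show "0<l1 \<and> uniq4 l1 l1 l2 l3 l4 \<or> 0<l2 \<and> uniq4 l2 l1 l2 l3 l4 \<or> 0<l3 \<and> uniq4 l3 l1 l2 l3 l4 \<or> 0<(l4::nat) \<and> uniq4 l4 l1 l2 l3 l4"
    by blast
qed blast

lemma transfer4g:
  fixes l1 l2 l3 l4 :: nat and K1 K2 K3 K4 E :: "'b"
  assumes "(l1=0)=(K1=E)" "(l2=0)=(K2=E)" "(l3=0)=(K3=E)" "(l4=0)=(K4=E)"
   "l1\<noteq>0 \<Longrightarrow> l2\<noteq>0 \<Longrightarrow> (l1=l2)=(K1=K2)" "l1\<noteq>0 \<Longrightarrow> l3\<noteq>0 \<Longrightarrow> (l1=l3)=(K1=K3)"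
   "l1\<noteq>0 \<Longrightarrow> l4\<noteq>0 \<Longrightarrow> (l1=l4)=(K1=K4)" "l2\<noteq>0 \<Longrightarrow> l3\<noteq>0 \<Longrightarrow> (l2=l3)=(K2=K3)"
   "l2\<noteq>0 \<Longrightarrow> l4\<noteq>0 \<Longrightarrow> (l2=l4)=(K2=K4)" "l3\<noteq>0 \<Longrightarrow> l4\<noteq>0 \<Longrightarrow> (l3=l4)=(K3=K4)"
  shows "(0<l1 \<and> uniq4 l1 l1 l2 l3 l4 \<or> 0<l2 \<and> uniq4 l2 l1 l2 l3 l4 \<or> 0<l3 \<and> uniq4 l3 l1 l2 l3 l4 \<or> 0<(l4::nat) \<and> uniq4 l4 l1 l2 l3 l4) =
     (uniq4 K1 K1 K2 K3 K4 \<and> K1 \<noteq> E \<or> uniq4 K2 K1 K2 K3 K4 \<and> K2 \<noteq> E \<or>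
      uniq4 K3 K1 K2 K3 K4 \<and> K3 \<noteq> E \<or> uniq4 K4 K1 K2 K3 K4 \<and> K4 \<noteq> E)"
    and "(K1 \<noteq> E \<longrightarrow> uniq4 K1 K1 K2 K3 K4) \<and> (K2 \<noteq> E \<longrightarrow> uniq4 K2 K1 K2 K3 K4) \<and>
         (K3 \<noteq> E \<longrightarrow> uniq4 K3 K1 K2 K3 K4) \<and> (K4 \<noteq> E \<longrightarrow> uniq4 K4 K1 K2 K3 K4) \<Longrightarrow>
         (l1 \<noteq> 0 \<longrightarrow> uniq4 l1 l1 l2 l3 l4) \<and> (l2 \<noteq> 0 \<longrightarrow> uniq4 l2 l1 l2 l3 l4) \<and>
         (l3 \<noteq> 0 \<longrightarrow> uniq4 l3 l1 l2 l3 l4) \<and> (l4 \<noteq> 0 \<longrightarrow> uniq4 l4 l1 l2 l3 l4)"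
proof -
  have pr: "\<And>a b A B. (a::nat)\<noteq>0 \<Longrightarrow> (a=0)=(A=E) \<Longrightarrow> (b=0)=(B=E) \<Longrightarrow> (b\<noteq>0 \<Longrightarrow> (a=b)=(A=B)) \<Longrightarrow> (a=b)=(A=B)"
    by metis
  have q1: "\<And>x b c d. uniq4 x x b c d = (x\<noteq>b \<and> x\<noteq>c \<and> x\<noteq>d)" unfolding uniq4_def by blast
  have q2: "\<And>x a c d. uniq4 x a x c d = (x\<noteq>a \<and> x\<noteq>c \<and> x\<noteq>d)" unfolding uniq4_def by blast
  have q3: "\<And>x a b d. uniq4 x a b x d = (x\<noteq>a \<and> x\<noteq>b \<and> x\<noteq>d)" unfolding uniq4_def by blast
  have q4: "\<And>x a b c. uniq4 x a b c x = (x\<noteq>a \<and> x\<noteq>b \<and> x\<noteq>c)" unfolding uniq4_def by blast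
  have u1: "l1 \<noteq> 0 \<Longrightarrow> uniq4 l1 l1 l2 l3 l4 = uniq4 K1 K1 K2 K3 K4"
  proof -
    assume h: "l1 \<noteq> 0"
    have "(l1=l2)=(K1=K2)" "(l1=l3)=(K1=K3)" "(l1=l4)=(K1=K4)"
      by (rule pr[OF h]; use assms in blast)+
    then show ?thesis unfolding q1 by simp
  qed
  have u2: "l2 \<noteq> 0 \<Longrightarrow> uniq4 l2 l1 l2 l3 l4 = uniq4 K2 K1 K2 K3 K4"
  proof -
    assume h: "l2 \<noteq> 0"
    have "(l2=l1)=(K2=K1)" "(l2=l3)=(K2=K3)" "(l2=l4)=(K2=K4)"
      by (rule pr[OF h]; use assms in metis)+
    then show ?thesis unfolding q2 by simp
  qed
  have u3: "l3 \<noteq> 0 \<Longrightarrow> uniq4 l3 l1 l2 l3 l4 = uniq4 K3 K1 K2 K3 K4"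
  proof -
    assume h: "l3 \<noteq> 0"
    have "(l3=l1)=(K3=K1)" "(l3=l2)=(K3=K2)" "(l3=l4)=(K3=K4)"
      by (rule pr[OF h]; use assms in metis)+
    then show ?thesis unfolding q3 by simp
  qed
  have u4: "l4 \<noteq> 0 \<Longrightarrow> uniq4 l4 l1 l2 l3 l4 = uniq4 K4 K1 K2 K3 K4"
  proof -
    assume h: "l4 \<noteq> 0"
    have "(l4=l1)=(K4=K1)" "(l4=l2)=(K4=K2)" "(l4=l3)=(K4=K3)"
      by (rule pr[OF h]; use assms in metis)+
    then show ?thesis unfolding q4 by simp
  qed
  have v1: "(0<l1 \<and> uniq4 l1 l1 l2 l3 l4) = (uniq4 K1 K1 K2 K3 K4 \<and> K1 \<noteq> E)"
    using u1 assms(1) by (cases "l1=0") auto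
  have v2: "(0<l2 \<and> uniq4 l2 l1 l2 l3 l4) = (uniq4 K2 K1 K2 K3 K4 \<and> K2 \<noteq> E)"
    using u2 assms(2) by (cases "l2=0") auto
  have v3: "(0<l3 \<and> uniq4 l3 l1 l2 l3 l4) = (uniq4 K3 K1 K2 K3 K4 \<and> K3 \<noteq> E)"
    using u3 assms(3) by (cases "l3=0") auto
  have v4: "(0<l4 \<and> uniq4 l4 l1 l2 l3 l4) = (uniq4 K4 K1 K2 K3 K4 \<and> K4 \<noteq> E)"
    using u4 assms(4) by (cases "l4=0") auto
  show "(0<l1 \<and> uniq4 l1 l1 l2 l3 l4 \<or> 0<l2 \<and> uniq4 l2 l1 l2 l3 l4 \<or> 0<l3 \<and> uniq4 l3 l1 l2 l3 l4 \<or> 0<(l4::nat) \<and> uniq4 l4 l1 l2 l3 l4) =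
     (uniq4 K1 K1 K2 K3 K4 \<and> K1 \<noteq> E \<or> uniq4 K2 K1 K2 K3 K4 \<and> K2 \<noteq> E \<or>
      uniq4 K3 K1 K2 K3 K4 \<and> K3 \<noteq> E \<or> uniq4 K4 K1 K2 K3 K4 \<and> K4 \<noteq> E)"
    unfolding v1 v2 v3 v4 ..
  show "(K1 \<noteq> E \<longrightarrow> uniq4 K1 K1 K2 K3 K4) \<and> (K2 \<noteq> E \<longrightarrow> uniq4 K2 K1 K2 K3 K4) \<and>
         (K3 \<noteq> E \<longrightarrow> uniq4 K3 K1 K2 K3 K4) \<and> (K4 \<noteq> E \<longrightarrow> uniq4 K4 K1 K2 K3 K4) \<Longrightarrow>
         (l1 \<noteq> 0 \<longrightarrow> uniq4 l1 l1 l2 l3 l4) \<and> (l2 \<noteq> 0 \<longrightarrow> uniq4 l2 l1 l2 l3 l4) \<and>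
         (l3 \<noteq> 0 \<longrightarrow> uniq4 l3 l1 l2 l3 l4) \<and> (l4 \<noteq> 0 \<longrightarrow> uniq4 l4 l1 l2 l3 l4)"
    using u1 u2 u3 u4 assms(1-4) by blast
qed

lemma AD:
  assumes d: "distinct [s1,s2,s3,s4]" and G: "Gamma TT e = {s1,s2,s3,s4}"
    and k: "k s1 = key a b" "k s2 = key c d" "k s3 = key a c" "k s4 = key b d"
    and zero: "\<forall>s\<in>{s1,s2,s3,s4}. (lam s = 0) = (k s = {})"
    and eq: "\<forall>s\<in>{s1,s2,s3,s4}. \<forall>s'\<in>{s1,s2,s3,s4}. lam s \<noteq> 0 \<longrightarrow> lam s' \<noteq> 0 \<longrightarrow> (lam s = lam s') = (k s = k s')"
  shows "(theta TT lam e \<noteq> {}) = UK a b c d"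
    and "theta TT lam e \<noteq> {} \<Longrightarrow> s \<in> Gamma TT e \<Longrightarrow> lam s \<noteq> 0 \<Longrightarrow> lam s \<in> theta TT lam e"
proof -
  have th: "theta TT lam e = {x. 0 < x \<and> uniq4 x (lam s1) (lam s2) (lam s3) (lam s4)}"
    unfolding theta_def G card4[OF d] ..
  note T = transfer4g[where E="{}", of "lam s1" "k s1" "lam s2" "k s2" "lam s3" "k s3" "lam s4" "k s4"]
  have hyps: "(lam s1=0)=(k s1={})" "(lam s2=0)=(k s2={})" "(lam s3=0)=(k s3={})" "(lam s4=0)=(k s4={})"
   "lam s1\<noteq>0 \<Longrightarrow> lam s2\<noteq>0 \<Longrightarrow> (lam s1=lam s2)=(k s1=k s2)" "lam s1\<noteq>0 \<Longrightarrow> lam s3\<noteq>0 \<Longrightarrow> (lam s1=lam s3)=(k s1=k s3)"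
   "lam s1\<noteq>0 \<Longrightarrow> lam s4\<noteq>0 \<Longrightarrow> (lam s1=lam s4)=(k s1=k s4)" "lam s2\<noteq>0 \<Longrightarrow> lam s3\<noteq>0 \<Longrightarrow> (lam s2=lam s3)=(k s2=k s3)"
   "lam s2\<noteq>0 \<Longrightarrow> lam s4\<noteq>0 \<Longrightarrow> (lam s2=lam s4)=(k s2=k s4)" "lam s3\<noteq>0 \<Longrightarrow> lam s4\<noteq>0 \<Longrightarrow> (lam s3=lam s4)=(k s3=k s4)"
    using zero eq by auto
  have A: "(theta TT lam e \<noteq> {}) = (\<exists>x. 0 < x \<and> uniq4 x (lam s1) (lam s2) (lam s3) (lam s4))"
    unfolding th by auto
  show 1: "(theta TT lam e \<noteq> {}) = UK a b c d"
    using T(1)[OF hyps] unfolding A ex_uniq4 UK_def k[symmetric] by simp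
  assume ne: "theta TT lam e \<noteq> {}" and s: "s \<in> Gamma TT e" "lam s \<noteq> 0"
  have "UK a b c d" using 1 ne by simp
  then have "(k s1 \<noteq> {} \<longrightarrow> uniq4 (k s1) (k s1) (k s2) (k s3) (k s4)) \<and> (k s2 \<noteq> {} \<longrightarrow> uniq4 (k s2) (k s1) (k s2) (k s3) (k s4)) \<and>
         (k s3 \<noteq> {} \<longrightarrow> uniq4 (k s3) (k s1) (k s2) (k s3) (k s4)) \<and> (k s4 \<noteq> {} \<longrightarrow> uniq4 (k s4) (k s1) (k s2) (k s3) (k s4))"
    unfolding k UK_def by (rule comb_core)
  from T(2)[OF hyps this] s show "lam s \<in> theta TT lam e" unfolding th G by auto
qed


lemma theta_cong: "(\<And>u. u \<in> Gamma TT s \<Longrightarrow> f u = g u) \<Longrightarrow> theta TT f s = theta TT g s"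
proof -
  assume h: "\<And>u. u \<in> Gamma TT s \<Longrightarrow> f u = g u"
  have "\<And>l. {s'\<in>Gamma TT s. f s' = l} = {s'\<in>Gamma TT s. g s' = l}" using h by auto
  then show ?thesis unfolding theta_def by simp
qed

definition oddbox :: "cell set \<Rightarrow> bool" where
  "oddbox B = (\<exists>l1 h1 l2 h2 l3 h3. B = {l1..h1}\<times>{l2..h2}\<times>{l3..h3} \<and> odd l1 \<and> odd h1 \<and> odd l2 \<and> odd h2 \<and> odd l3 \<and> odd h3)"

lemma Gamma_sub: "oddbox B \<Longrightarrow> s \<in> B \<Longrightarrow> Gamma TT s \<subseteq> B"
  unfolding oddbox_def using Gamma_box by blast

lemma oddbox_T: "1 \<le> n1 \<Longrightarrow> 1 \<le> n2 \<Longrightarrow> 1 \<le> n3 \<Longrightarrow> oddbox (Tgrid n1 n2 n3)"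
  unfolding oddbox_def Tgrid_def by (rule exI[of _ 1], rule exI[of _ "2*n1-1"], rule exI[of _ 1], rule exI[of _ "2*n2-1"],
    rule exI[of _ 1], rule exI[of _ "2*n3-1"]) auto

lemma voxel_in:
  assumes "u \<in> Tgrid n1 n2 n3" "odd_count u = 3"
  shows "voxel_of u \<in> Vgrid n1 n2 n3"
proof -
  obtain x y z where u: "u = (x,y,z)" by (cases u) auto
  have "odd x" "odd y" "odd z" using assms(2) unfolding u odd_count_simp by (auto split: if_splits)
  moreover have "1 \<le> x" "x \<le> 2*n1-1" "1 \<le> y" "y \<le> 2*n2-1" "1 \<le> z" "z \<le> 2*n3-1" using assms(1) u by (auto simp: Tgrid_def)
  ultimately show ?thesis unfolding u voxel_of_def Vgrid_def by simp presburger
qed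
lemma cell1E:
  assumes "e \<in> Tgrid n1 n2 n3" "odd_count e = 1"
  obtains s1 s2 s3 s4 ua ub uc ud where "Gamma (Tgrid n1 n2 n3) e = {s1,s2,s3,s4}" "distinct [s1,s2,s3,s4]"
    "Gamma (Tgrid n1 n2 n3) s1 = {ua,ub}" "Gamma (Tgrid n1 n2 n3) s2 = {uc,ud}"
    "Gamma (Tgrid n1 n2 n3) s3 = {ua,uc}" "Gamma (Tgrid n1 n2 n3) s4 = {ub,ud}"
    "ua \<noteq> ub" "uc \<noteq> ud" "ua \<noteq> uc" "ub \<noteq> ud"
  using cell1[OF assms] apply (elim exE conjE) apply (rule that) apply assumption+ done



locale grid =
  fixes n1 n2 n3 :: nat and \<sigma> :: "cell \<Rightarrow> nat"
  assumes n1: "1 \<le> n1" and n2: "1 \<le> n2" and n3: "1 \<le> n3"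
    and seg: "segment_label_map n1 n2 n3 \<sigma>"
begin

abbreviation "TT \<equiv> Tgrid n1 n2 n3"
definition "tau3 = (\<lambda>u. \<sigma> (voxel_of u))"

definition good :: "cell set \<Rightarrow> (cell \<Rightarrow> nat) \<Rightarrow> (nat \<Rightarrow> nat) \<Rightarrow> bool" where
  "good B lam m = (is_LABEL TT \<sigma> B lam m \<and> oddbox B \<and> B \<subseteq> TT)"

lemma goodD:
  assumes "good B lam m"
  shows "\<forall>t. t \<notin> B \<longrightarrow> lam t = 0"
    and "\<forall>t\<in>B. odd_count t = 3 \<longrightarrow> lam t = \<sigma> (voxel_of t)"
    and "\<forall>j<3. \<forall>t\<in>B. odd_count t = j \<longrightarrow> (lam t = 0 \<longleftrightarrow> theta TT lam t = {})"
    and "\<forall>j<3. lam ` {t \<in> B. odd_count t = j \<and> theta TT lam t \<noteq> {}} = {1..m j}"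
    and "\<forall>j<3. \<forall>t1\<in>B. \<forall>t2\<in>B. odd_count t1 = j \<longrightarrow> odd_count t2 = j \<longrightarrow>
        theta TT lam t1 \<noteq> {} \<longrightarrow> theta TT lam t2 \<noteq> {} \<longrightarrow>
        (lam t1 = lam t2 \<longleftrightarrow> (t1, t2) \<in> (cls_rel TT B lam j)\<^sup>*)"
    and "oddbox B" and "B \<subseteq> TT"
proof -
  have L: "is_LABEL TT \<sigma> B lam m" and "oddbox B" and "B \<subseteq> TT" using assms unfolding good_def by (simp_all only:)
  then show "oddbox B" and "B \<subseteq> TT" by simp_all
  from L have C: "(\<forall>t. t \<notin> B \<longrightarrow> lam t = 0) \<and>
     (\<forall>t\<in>B. odd_count t = 3 \<longrightarrow> lam t = \<sigma> (voxel_of t)) \<and>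
     (\<forall>j<3. \<forall>t\<in>B. odd_count t = j \<longrightarrow> (lam t = 0 \<longleftrightarrow> theta TT lam t = {})) \<and>
     (\<forall>j<3. lam ` {t \<in> B. odd_count t = j \<and> theta TT lam t \<noteq> {}} = {1..m j}) \<and>
     (\<forall>j<3. \<forall>t1\<in>B. \<forall>t2\<in>B. odd_count t1 = j \<longrightarrow> odd_count t2 = j \<longrightarrow>
        theta TT lam t1 \<noteq> {} \<longrightarrow> theta TT lam t2 \<noteq> {} \<longrightarrow>
        (lam t1 = lam t2 \<longleftrightarrow> (t1, t2) \<in> (cls_rel TT B lam j)\<^sup>*))" unfolding is_LABEL_def .
  from C show "\<forall>t. t \<notin> B \<longrightarrow> lam t = 0" by (elim conjE)
  from C show "\<forall>t\<in>B. odd_count t = 3 \<longrightarrow> lam t = \<sigma> (voxel_of t)" by (elim conjE)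
  from C show "\<forall>j<3. \<forall>t\<in>B. odd_count t = j \<longrightarrow> (lam t = 0 \<longleftrightarrow> theta TT lam t = {})" by (elim conjE)
  from C show "\<forall>j<3. lam ` {t \<in> B. odd_count t = j \<and> theta TT lam t \<noteq> {}} = {1..m j}" by (elim conjE)
  from C show "\<forall>j<3. \<forall>t1\<in>B. \<forall>t2\<in>B. odd_count t1 = j \<longrightarrow> odd_count t2 = j \<longrightarrow>
        theta TT lam t1 \<noteq> {} \<longrightarrow> theta TT lam t2 \<noteq> {} \<longrightarrow>
        (lam t1 = lam t2 \<longleftrightarrow> (t1, t2) \<in> (cls_rel TT B lam j)\<^sup>*)" by (elim conjE)
qed

lemma tau3_pos: "u \<in> TT \<Longrightarrow> odd_count u = 3 \<Longrightarrow> tau3 u > 0"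
proof -
  have "\<forall>r\<in>Vgrid n1 n2 n3. 0 < \<sigma> r" using seg unfolding segment_label_map_def by (rule conjunct1)
  moreover assume "u \<in> TT" "odd_count u = 3"
  ultimately show ?thesis using voxel_in unfolding tau3_def by blast
qed

lemma good_3: "good B lam m \<Longrightarrow> u \<in> B \<Longrightarrow> odd_count u = 3 \<Longrightarrow> lam u = tau3 u"
  using goodD(2) unfolding tau3_def by blast

lemma good_sub: "good B lam m \<Longrightarrow> s \<in> B \<Longrightarrow> Gamma TT s \<subseteq> B"
  using goodD(6) Gamma_sub by blast

lemma good_theta2: "good B lam m \<Longrightarrow> s \<in> B \<Longrightarrow> odd_count s = 2 \<Longrightarrow> theta TT lam s = theta TT tau3 s"
proof (rule theta_cong)
  fix u assume a: "good B lam m" "s \<in> B" "odd_count s = 2" "u \<in> Gamma TT s"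
  then have "u \<in> B" using good_sub by blast
  moreover have "odd_count u = 3" using a(3,4) Gamma_in by fastforce
  ultimately show "lam u = tau3 u" using good_3 a(1) by blast
qed

lemma good_zero: "good B lam m \<Longrightarrow> s \<in> B \<Longrightarrow> odd_count s = j \<Longrightarrow> j < 3 \<Longrightarrow> (lam s = 0) = (theta TT lam s = {})"
  using goodD(3) by blast

lemma good_eq_theta:
  assumes "good B lam m" "s \<in> B" "s' \<in> B" "odd_count s = j" "odd_count s' = j" "j < 3" "lam s \<noteq> 0" "lam s' \<noteq> 0" "lam s = lam s'"
  shows "theta TT lam s = theta TT lam s'"
proof -
  have c5: "\<forall>j<3. \<forall>t1\<in>B. \<forall>t2\<in>B. odd_count t1 = j \<longrightarrow> odd_count t2 = j \<longrightarrow>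
        theta TT lam t1 \<noteq> {} \<longrightarrow> theta TT lam t2 \<noteq> {} \<longrightarrow>
        (lam t1 = lam t2 \<longleftrightarrow> (t1, t2) \<in> (cls_rel TT B lam j)\<^sup>*)"
    using goodD(5)[OF assms(1)] .
  have ne: "theta TT lam s \<noteq> {}" "theta TT lam s' \<noteq> {}"
    using good_zero[OF assms(1) assms(2) assms(4) assms(6)] good_zero[OF assms(1) assms(3) assms(5) assms(6)] assms(7,8) by simp_all
  have "(s,s') \<in> (cls_rel TT B lam j)\<^sup>*"
    using c5[rule_format, OF assms(6) assms(2) assms(3) assms(4) assms(5) ne] assms(9) by simp
  then show ?thesis
  proof (induction rule: rtrancl_induct)
    case (step y z)
    then show ?case unfolding cls_rel_def by simp
  qed simp
qed

lemma good_theta_eq: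
  assumes "good B lam m" "s \<in> B" "s' \<in> B" "odd_count s = j" "odd_count s' = j" "j < 3"
    "theta TT lam s \<noteq> {}" "theta TT lam s = theta TT lam s'" "connected_cells TT s s'"
  shows "lam s = lam s'"
proof -
  have "(s,s') \<in> cls_rel TT B lam j" using assms unfolding cls_rel_def by auto
  have c5: "\<forall>j<3. \<forall>t1\<in>B. \<forall>t2\<in>B. odd_count t1 = j \<longrightarrow> odd_count t2 = j \<longrightarrow>
        theta TT lam t1 \<noteq> {} \<longrightarrow> theta TT lam t2 \<noteq> {} \<longrightarrow>
        (lam t1 = lam t2 \<longleftrightarrow> (t1, t2) \<in> (cls_rel TT B lam j)\<^sup>*)"
    using goodD(5)[OF assms(1)] .
  have ne: "theta TT lam s' \<noteq> {}" using assms(7,8) by simp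
  show ?thesis using c5[rule_format, OF assms(6) assms(2) assms(3) assms(4) assms(5) assms(7) ne] \<open>(s,s') \<in> _\<close> by simp
qed

lemma good_1cell_AD:
  assumes g: "good B lam m" and eB: "e \<in> B" and e1: "odd_count e = 1"
    and d: "distinct [s1,s2,s3,s4]" and G: "Gamma TT e = {s1,s2,s3,s4}"
    and G1: "Gamma TT s1 = {ua,ub}" and G2: "Gamma TT s2 = {uc,ud}"
    and G3: "Gamma TT s3 = {ua,uc}" and G4: "Gamma TT s4 = {ub,ud}"
    and ne: "ua \<noteq> ub" "uc \<noteq> ud" "ua \<noteq> uc" "ub \<noteq> ud"
  shows "(theta TT lam e \<noteq> {}) = UK (tau3 ua) (tau3 ub) (tau3 uc) (tau3 ud)"
    and "theta TT lam e \<noteq> {} \<Longrightarrow> s \<in> Gamma TT e \<Longrightarrow> lam s \<noteq> 0 \<Longrightarrow> lam s \<in> theta TT lam e"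
proof -
  have eT: "e \<in> TT" using eB goodD(7)[OF g] by blast
  have sB: "s \<in> B" "odd_count s = 2" if "s \<in> Gamma TT e" for s
    using that good_sub[OF g eB] Gamma_in[OF that] e1 by auto
  have sG: "s \<in> Gamma TT e" if "s \<in> {s1,s2,s3,s4}" for s using that G by simp
  have u3: "u \<in> TT" "odd_count u = 3" if "s \<in> Gamma TT e" "u \<in> Gamma TT s" for s u
    using Gamma_in[OF that(2)] sB(2)[OF that(1)] by auto
  have p: "tau3 ua > 0" "tau3 ub > 0" "tau3 uc > 0" "tau3 ud > 0"
    using u3[of s1 ua] u3[of s1 ub] u3[of s2 uc] u3[of s2 ud] G G1 G2 tau3_pos by auto
  let ?k = "theta TT tau3"
  have k: "?k s1 = key (tau3 ua) (tau3 ub)" "?k s2 = key (tau3 uc) (tau3 ud)"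
     "?k s3 = key (tau3 ua) (tau3 uc)" "?k s4 = key (tau3 ub) (tau3 ud)"
    using theta2[OF G1 ne(1) p(1) p(2)] theta2[OF G2 ne(2) p(3) p(4)]
      theta2[OF G3 ne(3) p(1) p(3)] theta2[OF G4 ne(4) p(2) p(4)] by simp_all
  have th: "theta TT lam s = ?k s" if "s \<in> {s1,s2,s3,s4}" for s
    using good_theta2[OF g sB[OF sG[OF that]]] .
  have zero: "\<forall>s\<in>{s1,s2,s3,s4}. (lam s = 0) = (?k s = {})"
  proof
    fix s assume a: "s \<in> {s1,s2,s3,s4}"
    show "(lam s = 0) = (?k s = {})"
      using good_zero[OF g sB(1)[OF sG[OF a]] sB(2)[OF sG[OF a]]] th[OF a] by simp
  qed
  have eq: "\<forall>s\<in>{s1,s2,s3,s4}. \<forall>s'\<in>{s1,s2,s3,s4}. lam s \<noteq> 0 \<longrightarrow> lam s' \<noteq> 0 \<longrightarrow> (lam s = lam s') = (?k s = ?k s')"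
  proof (intro ballI impI)
    fix s s' assume a: "s \<in> {s1,s2,s3,s4}" "s' \<in> {s1,s2,s3,s4}" "lam s \<noteq> 0" "lam s' \<noteq> 0"
    note A = sB[OF sG[OF a(1)]] and A' = sB[OF sG[OF a(2)]]
    have cc: "connected_cells TT s s'" unfolding connected_cells_def using eT sG a by blast
    show "(lam s = lam s') = (?k s = ?k s')"
    proof
      assume "lam s = lam s'"
      then show "?k s = ?k s'" using good_eq_theta[OF g A(1) A'(1) A(2) A'(2) _ a(3,4)] th a by simp
    next
      assume h: "?k s = ?k s'"
      have "theta TT lam s \<noteq> {}" using good_zero[OF g A(1) A(2)] a(3) by simp
      then show "lam s = lam s'" using good_theta_eq[OF g A(1) A'(1) A(2) A'(2) _ _ _ cc] th a h by simp
    qed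
  qed
  note R = AD[OF d G, of ?k "tau3 ua" "tau3 ub" "tau3 uc" "tau3 ud", OF k zero eq]
  show "(theta TT lam e \<noteq> {}) = UK (tau3 ua) (tau3 ub) (tau3 uc) (tau3 ud)" by (rule R(1))
  show "theta TT lam e \<noteq> {} \<Longrightarrow> s \<in> Gamma TT e \<Longrightarrow> lam s \<noteq> 0 \<Longrightarrow> lam s \<in> theta TT lam e" by (rule R(2))
qed

lemma good_act_indep:
  assumes "good B lam m" "good B' lam' m'" "e \<in> B" "e \<in> B'" "odd_count e = 1"
  shows "(theta TT lam e \<noteq> {}) = (theta TT lam' e \<noteq> {})"
proof -
  have eT: "e \<in> TT" using assms(1,3) goodD(7) by blast
  obtain s1 s2 s3 s4 ua ub uc ud where
    W: "Gamma TT e = {s1,s2,s3,s4}" "distinct [s1,s2,s3,s4]"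
    "Gamma TT s1 = {ua,ub}" "Gamma TT s2 = {uc,ud}" "Gamma TT s3 = {ua,uc}" "Gamma TT s4 = {ub,ud}"
    "ua \<noteq> ub" "uc \<noteq> ud" "ua \<noteq> uc" "ub \<noteq> ud" by (rule cell1E[OF eT assms(5)])
  show ?thesis
    using good_1cell_AD(1)[OF assms(1) assms(3) assms(5) W(2) W(1) W(3-10)]
      good_1cell_AD(1)[OF assms(2) assms(4) assms(5) W(2) W(1) W(3-10)] by simp
qed

lemma good_theta1:
  assumes "good B lam m" "e \<in> B" "odd_count e = 1" "theta TT lam e \<noteq> {}"
  shows "theta TT lam e = lam ` Gamma TT e - {0}"
proof
  have eT: "e \<in> TT" using assms(1,2) goodD(7) by blast
  obtain s1 s2 s3 s4 ua ub uc ud where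
    W: "Gamma TT e = {s1,s2,s3,s4}" "distinct [s1,s2,s3,s4]"
    "Gamma TT s1 = {ua,ub}" "Gamma TT s2 = {uc,ud}" "Gamma TT s3 = {ua,uc}" "Gamma TT s4 = {ub,ud}"
    "ua \<noteq> ub" "uc \<noteq> ud" "ua \<noteq> uc" "ub \<noteq> ud" by (rule cell1E[OF eT assms(3)])
  show "lam ` Gamma TT e - {0} \<subseteq> theta TT lam e"
    using good_1cell_AD(2)[OF assms(1) assms(2) assms(3) W(2) W(1) W(3-10) assms(4)] by blast
next
  show "theta TT lam e \<subseteq> lam ` Gamma TT e - {0}"
  proof
    fix x assume "x \<in> theta TT lam e"
    then have "0 < x" "card {s \<in> Gamma TT e. lam s = x} = 1" unfolding theta_def by auto
    then obtain s where "s \<in> Gamma TT e" "lam s = x" by (metis (mono_tags, lifting) card_1_singletonE mem_Collect_eq singletonI)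
    then show "x \<in> lam ` Gamma TT e - {0}" using \<open>0 < x\<close> by auto
  qed
qed

lemma good_c5:
  assumes "good B lam m" "j < 3" "s \<in> B" "s' \<in> B" "odd_count s = j" "odd_count s' = j"
    "theta TT lam s \<noteq> {}" "theta TT lam s' \<noteq> {}"
  shows "(lam s = lam s') = ((s, s') \<in> (cls_rel TT B lam j)\<^sup>*)"
  using goodD(5)[OF assms(1), rule_format, OF assms(2-8)] .

lemma transfer_sound:
  assumes g: "good B lam m" and gT: "good TT \<tau> mT" and j: "j < 3"
    and sub: "cls_rel TT B lam j \<subseteq> cls_rel TT TT \<tau> j"
    and act: "\<And>x. x \<in> B \<Longrightarrow> odd_count x = j \<Longrightarrow> theta TT lam x \<noteq> {} \<Longrightarrow> theta TT \<tau> x \<noteq> {}"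
    and s: "s \<in> B" "s' \<in> B" "odd_count s = j" "odd_count s' = j" "lam s \<noteq> 0" "lam s = lam s'"
  shows "\<tau> s = \<tau> s'"
proof -
  have BT: "B \<subseteq> TT" using goodD(7)[OF g] .
  have ne: "theta TT lam s \<noteq> {}" "theta TT lam s' \<noteq> {}"
    using good_zero[OF g s(1) s(3) j] good_zero[OF g s(2) s(4) j] s(5,6) by simp_all
  have "(s,s') \<in> (cls_rel TT B lam j)\<^sup>*" using good_c5[OF g j s(1-4) ne] s(6) by simp
  then have "(s,s') \<in> (cls_rel TT TT \<tau> j)\<^sup>*" using rtrancl_mono[OF sub] by blast
  moreover have "theta TT \<tau> s \<noteq> {}" "theta TT \<tau> s' \<noteq> {}" using act s ne by auto
  ultimately show ?thesis using good_c5[OF gT j _ _ s(3,4)] s(1,2) BT by blast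
qed

lemma act2:
  assumes g: "good B lam m" and gT: "good TT \<tau> mT" and s: "s \<in> B" "odd_count s = 2"
  shows "(lam s = 0) = (\<tau> s = 0)"
proof -
  have "s \<in> TT" using goodD(7)[OF g] s by blast
  then show ?thesis using good_zero[OF g s] good_zero[OF gT _ s(2)] good_theta2[OF g s]
     good_theta2[OF gT _ s(2)] by simp
qed

lemma act1:
  assumes g: "good B lam m" and gT: "good TT \<tau> mT" and s: "s \<in> B" "odd_count s = 1"
  shows "(lam s = 0) = (\<tau> s = 0)"
proof -
  have sT: "s \<in> TT" using goodD(7)[OF g] s by blast
  show ?thesis using good_zero[OF g s] good_zero[OF gT sT s(2)] good_act_indep[OF g gT s(1) sT s(2)] by simp
qed

lemma BS2:
  assumes g: "good B lam m" and gT: "good TT \<tau> mT"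
    and s: "s \<in> B" "s' \<in> B" "odd_count s = 2" "odd_count s' = 2" "lam s \<noteq> 0" "lam s = lam s'"
  shows "\<tau> s = \<tau> s'"
proof (rule transfer_sound[OF g gT _ _ _ s])
  have BT: "B \<subseteq> TT" using goodD(7)[OF g] .
  show "cls_rel TT B lam 2 \<subseteq> cls_rel TT TT \<tau> 2"
  proof
    fix p assume "p \<in> cls_rel TT B lam 2"
    then obtain x y where p: "p = (x,y)" "x \<in> B" "y \<in> B" "odd_count x = 2" "odd_count y = 2"
      "theta TT lam x \<noteq> {}" "theta TT lam x = theta TT lam y" "connected_cells TT x y"
      unfolding cls_rel_def by blast
    have "x \<in> TT" "y \<in> TT" using BT p by auto
    then show "p \<in> cls_rel TT TT \<tau> 2" using p good_theta2[OF g] good_theta2[OF gT] unfolding cls_rel_def by simp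
  qed
  fix x assume "x \<in> B" "odd_count x = 2" "theta TT lam x \<noteq> {}"
  moreover have "x \<in> TT" using BT \<open>x \<in> B\<close> by auto
  ultimately show "theta TT \<tau> x \<noteq> {}" using good_theta2[OF g] good_theta2[OF gT] by simp
qed simp

lemma BS1:
  assumes g: "good B lam m" and gT: "good TT \<tau> mT"
    and s: "s \<in> B" "s' \<in> B" "odd_count s = 1" "odd_count s' = 1" "lam s \<noteq> 0" "lam s = lam s'"
  shows "\<tau> s = \<tau> s'"
proof (rule transfer_sound[OF g gT _ _ _ s])
  have BT: "B \<subseteq> TT" using goodD(7)[OF g] .
  have actx: "theta TT \<tau> x \<noteq> {}" if "x \<in> B" "odd_count x = 1" "theta TT lam x \<noteq> {}" for x
  proof -
    have "x \<in> TT" using BT that by auto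
    then show ?thesis using good_act_indep[OF g gT that(1) _ that(2)] that(3) by simp
  qed
  show "cls_rel TT B lam 1 \<subseteq> cls_rel TT TT \<tau> 1"
  proof
    fix p assume "p \<in> cls_rel TT B lam 1"
    then obtain x y where p: "p = (x,y)" "x \<in> B" "y \<in> B" "odd_count x = 1" "odd_count y = 1"
      "theta TT lam x \<noteq> {}" "theta TT lam x = theta TT lam y" "connected_cells TT x y"
      unfolding cls_rel_def by blast
    have xT: "x \<in> TT" and yT: "y \<in> TT" using BT p by auto
    have ax: "theta TT \<tau> x \<noteq> {}" using actx p by blast
    have ay: "theta TT \<tau> y \<noteq> {}" using actx[of y] p by simp
    have ly: "theta TT lam y \<noteq> {}" using p by simp
    have inc: "\<tau> ` Gamma TT a - {0} \<subseteq> \<tau> ` Gamma TT b - {0}"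
      if ab: "a \<in> B" "b \<in> B" "odd_count a = 1" "odd_count b = 1" "theta TT lam a \<noteq> {}" "theta TT lam a = theta TT lam b" for a b
    proof
      fix z assume "z \<in> \<tau> ` Gamma TT a - {0}"
      then obtain s where sg: "s \<in> Gamma TT a" "\<tau> s = z" "z \<noteq> 0" by blast
      have sB: "s \<in> B" "odd_count s = 2" using good_sub[OF g ab(1)] sg(1) Gamma_in[OF sg(1)] ab(3) by auto
      have "lam s \<noteq> 0" using act2[OF g gT sB] sg by simp
      then have "lam s \<in> theta TT lam b" using good_theta1[OF g ab(1) ab(3) ab(5)] ab(6) sg(1) by auto
      moreover have "theta TT lam b \<noteq> {}" using ab by simp
      ultimately have "lam s \<in> lam ` Gamma TT b - {0}" using good_theta1[OF g ab(2) ab(4)] by simp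
      then obtain s' where s': "s' \<in> Gamma TT b" "lam s' = lam s" by (metis DiffD1 imageE)
      have s'B: "s' \<in> B" "odd_count s' = 2" using good_sub[OF g ab(2)] s'(1) Gamma_in[OF s'(1)] ab(4) by auto
      have "\<tau> s = \<tau> s'" using BS2[OF g gT sB(1) s'B(1) sB(2) s'B(2) \<open>lam s \<noteq> 0\<close>] s'(2) by simp
      then have "z = \<tau> s'" using sg(2) by simp
      then show "z \<in> \<tau> ` Gamma TT b - {0}" using s'(1) sg(3) by blast
    qed
    have i1: "\<tau> ` Gamma TT x - {0} \<subseteq> \<tau> ` Gamma TT y - {0}" by (rule inc[OF p(2) p(3) p(4) p(5) p(6) p(7)])
    have i2: "\<tau> ` Gamma TT y - {0} \<subseteq> \<tau> ` Gamma TT x - {0}" by (rule inc[OF p(3) p(2) p(5) p(4) ly p(7)[symmetric]])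
    have "\<tau> ` Gamma TT x - {0} = \<tau> ` Gamma TT y - {0}" by (rule equalityI[OF i1 i2])
    then have "theta TT \<tau> x = theta TT \<tau> y"
      using good_theta1[OF gT xT p(4) ax] good_theta1[OF gT yT p(5) ay] by simp
    then show "p \<in> cls_rel TT TT \<tau> 1" using p xT yT ax unfolding cls_rel_def by simp
  qed
  show "\<And>x. x \<in> B \<Longrightarrow> odd_count x = 1 \<Longrightarrow> theta TT lam x \<noteq> {} \<Longrightarrow> theta TT \<tau> x \<noteq> {}" by (rule actx)
qed simp

end


lemma valid_axis_nth:
  assumes "valid_axis n xs" "i < length xs"
  shows "odd (xs!i) \<and> 1 \<le> xs!i \<and> xs!i \<le> 2*n-1"
proof -
  have ne: "xs \<noteq> []" and h: "hd xs = 1" and l: "last xs = 2*n-1" and so: "sorted_wrt (<) xs"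
    and od: "\<forall>x\<in>set xs. odd x" using assms(1) unfolding valid_axis_def by auto
  have "odd (xs!i)" using od assms(2) nth_mem by blast
  moreover have "xs!0 \<le> xs!i"
    using sorted_wrt_nth_less[OF so, of 0 i] assms(2) by (cases i) auto
  moreover have "xs!i \<le> xs!(length xs - 1)"
  proof -
    have "i < length xs - 1 \<or> i = length xs - 1" using assms(2) by linarith
    moreover have "length xs - 1 < length xs" using assms(2) by linarith
    ultimately show ?thesis using sorted_wrt_nth_less[OF so, of i "length xs - 1"] by (auto simp del: One_nat_def)
  qed
  moreover have "xs!0 = 1" using h ne by (simp add: hd_conv_nth)
  moreover have "xs!(length xs - 1) = 2*n-1" using l ne by (simp add: last_conv_nth)
  ultimately show ?thesis by simp
qed

locale bw = grid +
  fixes \<tau> :: "cell \<Rightarrow> nat" and mT :: "nat \<Rightarrow> nat" and a1 a2 a3 :: "nat list"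
    and ord :: "nat \<Rightarrow> cell" and lamB :: "cell \<Rightarrow> cell \<Rightarrow> nat" and mB :: "cell \<Rightarrow> nat \<Rightarrow> nat"
    and rep :: "nat \<Rightarrow> nat \<Rightarrow> nat" and lab :: "cell \<Rightarrow> nat" and K :: nat
    and off :: "nat \<Rightarrow> nat \<Rightarrow> nat" and g :: "nat \<Rightarrow> cell \<Rightarrow> nat" and U :: "nat \<Rightarrow> nat rel"
  assumes gT: "good TT \<tau> mT"
    and va1: "valid_axis n1 a1" and va2: "valid_axis n2 a2" and va3: "valid_axis n3 a3"
    and ordb: "bij_betw ord {..<K} (block_indices a1 a2 a3)"
    and st1: "\<forall>k\<in>block_indices a1 a2 a3. is_LABEL TT \<sigma> (blk a1 a2 a3 k) (lamB k) (mB k)"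
    and offd: "off = (\<lambda>j i. \<Sum>i'<i. mB (ord i') j)"
    and gd: "g = (\<lambda>i t. if lamB (ord i) t = 0 then 0 else lamB (ord i) t + off (odd_count t) i)"
    and Ud: "U = (\<lambda>j. {(g i t, g i' t) | i i' t. i < K \<and> i' < K \<and>
                   t \<in> blk a1 a2 a3 (ord i) \<and> t \<in> blk a1 a2 a3 (ord i') \<and> odd_count t = j \<and>
                   lamB (ord i) t \<noteq> 0 \<and> lamB (ord i') t \<noteq> 0})"
    and repd: "\<forall>j\<in>{1,2}. (\<forall>l l'. rep j l = rep j l' \<longleftrightarrow> (l, l') \<in> (U j)\<^sup>*) \<and> (\<forall>l. (l, rep j l) \<in> (U j)\<^sup>*)"
    and lab0: "\<forall>t\<in>TT. odd_count t = 0 \<longrightarrow> (\<exists>i<K. t \<in> blk a1 a2 a3 (ord i) \<and> lab t = g i t)"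
    and lab12: "\<forall>t\<in>TT. odd_count t \<in> {1,2} \<longrightarrow> (\<exists>i<K. t \<in> blk a1 a2 a3 (ord i) \<and> lab t = rep (odd_count t) (g i t))"
begin

abbreviation "Bk i \<equiv> blk a1 a2 a3 (ord i)"

lemma blk_good:
  assumes "k \<in> block_indices a1 a2 a3"
  shows "good (blk a1 a2 a3 k) (lamB k) (mB k)"
proof -
  obtain k1 k2 k3 where k: "k = (k1,k2,k3)" by (cases k) auto
  have r: "1 \<le> k1" "k1 < length a1" "1 \<le> k2" "k2 < length a2" "1 \<le> k3" "k3 < length a3"
    using assms unfolding k block_indices_def by auto
  have A: "odd (a1!(k1-1)) \<and> 1 \<le> a1!(k1-1) \<and> a1!(k1-1) \<le> 2*n1-1" "odd (a1!k1) \<and> 1 \<le> a1!k1 \<and> a1!k1 \<le> 2*n1-1"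
    using valid_axis_nth[OF va1, of "k1-1"] valid_axis_nth[OF va1, of k1] r by auto
  have B: "odd (a2!(k2-1)) \<and> 1 \<le> a2!(k2-1) \<and> a2!(k2-1) \<le> 2*n2-1" "odd (a2!k2) \<and> 1 \<le> a2!k2 \<and> a2!k2 \<le> 2*n2-1"
    using valid_axis_nth[OF va2, of "k2-1"] valid_axis_nth[OF va2, of k2] r by auto
  have C: "odd (a3!(k3-1)) \<and> 1 \<le> a3!(k3-1) \<and> a3!(k3-1) \<le> 2*n3-1" "odd (a3!k3) \<and> 1 \<le> a3!k3 \<and> a3!k3 \<le> 2*n3-1"
    using valid_axis_nth[OF va3, of "k3-1"] valid_axis_nth[OF va3, of k3] r by auto
  have ob: "oddbox (blk a1 a2 a3 k)" unfolding oddbox_def blk_def k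
    apply (rule exI[of _ "a1!(k1-1)"], rule exI[of _ "a1!k1"], rule exI[of _ "a2!(k2-1)"], rule exI[of _ "a2!k2"],
       rule exI[of _ "a3!(k3-1)"], rule exI[of _ "a3!k3"])
    using A B C by simp
  have sub: "blk a1 a2 a3 k \<subseteq> TT" unfolding blk_def k Tgrid_def using A B C by auto
  show ?thesis unfolding good_def using st1 assms ob sub by blast
qed

lemma ord_in: "i < K \<Longrightarrow> ord i \<in> block_indices a1 a2 a3"
  using ordb bij_betwE by blast

lemma goodi: "i < K \<Longrightarrow> good (Bk i) (lamB (ord i)) (mB (ord i))"
  using blk_good ord_in by blast

lemma g_range:
  assumes "i < K" "s \<in> Bk i" "odd_count s = j" "j < 3" "lamB (ord i) s \<noteq> 0"
  shows "off j i < g i s \<and> g i s \<le> off j (Suc i)"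
proof -
  note G = goodi[OF assms(1)]
  have "theta TT (lamB (ord i)) s \<noteq> {}" using good_zero[OF G assms(2,3,4)] assms(5) by simp
  then have "lamB (ord i) s \<in> lamB (ord i) ` {t \<in> Bk i. odd_count t = j \<and> theta TT (lamB (ord i)) t \<noteq> {}}"
    using assms(2,3) by blast
  also have "\<dots> = {1..mB (ord i) j}" using goodD(4)[OF G] assms(4) by blast
  finally have "1 \<le> lamB (ord i) s" "lamB (ord i) s \<le> mB (ord i) j" by auto
  moreover have "off j (Suc i) = off j i + mB (ord i) j" unfolding offd by simp
  ultimately show ?thesis unfolding gd using assms(3,5) by simp
qed

lemma off_mono: "a \<le> b \<Longrightarrow> off j a \<le> off j b"
  unfolding offd by (rule sum_mono2) auto

lemma g_inj:
  assumes "i < K" "s \<in> Bk i" "odd_count s = j" "lamB (ord i) s \<noteq> 0"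
    "i' < K" "s' \<in> Bk i'" "odd_count s' = j" "lamB (ord i') s' \<noteq> 0" "j < 3" "g i s = g i' s'"
  shows "i = i'"
proof (rule ccontr)
  assume "i \<noteq> i'"
  then consider "i < i'" | "i' < i" by linarith
  then show False
  proof cases
    case 1
    then have "g i s \<le> off j (Suc i)" "off j (Suc i) \<le> off j i'" "off j i' < g i' s'"
      using g_range[OF assms(1-3) assms(9) assms(4)] g_range[OF assms(5-7) assms(9) assms(8)] off_mono[of "Suc i" i'] by auto
    then show False using assms(10) by simp
  next
    case 2
    then have "g i' s' \<le> off j (Suc i')" "off j (Suc i') \<le> off j i" "off j i < g i s"
      using g_range[OF assms(1-3) assms(9) assms(4)] g_range[OF assms(5-7) assms(9) assms(8)] off_mono[of "Suc i'" i] by auto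
    then show False using assms(10) by simp
  qed
qed

lemma BSj:
  assumes "j \<in> {1,2}" "good B lam m" "s \<in> B" "s' \<in> B" "odd_count s = j" "odd_count s' = j" "lam s \<noteq> 0" "lam s = lam s'"
  shows "\<tau> s = \<tau> s'"
proof -
  have "j = 1 \<or> j = 2" using assms(1) by simp
  then show ?thesis
  proof
    assume "j = 1" then show ?thesis using BS1[OF assms(2) gT assms(3,4) _ _ assms(7,8)] assms(5,6) by simp
  next
    assume "j = 2" then show ?thesis using BS2[OF assms(2) gT assms(3,4) _ _ assms(7,8)] assms(5,6) by simp
  qed
qed

lemma g_sound:
  assumes "j \<in> {1,2}" "i < K" "s \<in> Bk i" "odd_count s = j" "lamB (ord i) s \<noteq> 0"
    "i' < K" "s' \<in> Bk i'" "odd_count s' = j" "lamB (ord i') s' \<noteq> 0" "g i s = g i' s'"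
  shows "\<tau> s = \<tau> s'"
proof -
  have j3: "j < 3" using assms(1) by auto
  have ii: "i = i'" using g_inj[OF assms(2-5) assms(6-9) j3 assms(10)] .
  have "lamB (ord i) s = lamB (ord i) s'" using assms(10) assms(4,5,8,9) unfolding gd ii by simp
  then show ?thesis using BSj[OF assms(1) goodi[OF assms(2)] assms(3) _ assms(4) assms(8) assms(5)] assms(7) ii by simp
qed

lemma U_sound:
  assumes "(L, L') \<in> (U j)\<^sup>*" "j \<in> {1,2}"
  shows "\<And>i s i' s'. i < K \<Longrightarrow> s \<in> Bk i \<Longrightarrow> odd_count s = j \<Longrightarrow> lamB (ord i) s \<noteq> 0 \<Longrightarrow> g i s = L \<Longrightarrow>
     i' < K \<Longrightarrow> s' \<in> Bk i' \<Longrightarrow> odd_count s' = j \<Longrightarrow> lamB (ord i') s' \<noteq> 0 \<Longrightarrow> g i' s' = L' \<Longrightarrow> \<tau> s = \<tau> s'"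
  using assms(1)
proof (induction rule: rtrancl_induct)
  case base
  then show ?case using g_sound[OF assms(2)] by metis
next
  case (step M N)
  from step.hyps(2) obtain i1 i2 t where u: "M = g i1 t" "N = g i2 t" "i1 < K" "i2 < K" "t \<in> Bk i1" "t \<in> Bk i2"
    "odd_count t = j" "lamB (ord i1) t \<noteq> 0" "lamB (ord i2) t \<noteq> 0"
    unfolding Ud by blast
  have "\<tau> s = \<tau> t" using step.IH[OF step.prems(1-5) u(3) u(5) u(7) u(8) u(1)[symmetric]] .
  also have "\<tau> t = \<tau> s'" using g_sound[OF assms(2) u(4) u(6) u(7) u(9) step.prems(6-9)] u(2) step.prems(10) by simp
  finally show ?case .
qed

lemma U_pos: "(a, b) \<in> U j \<Longrightarrow> 0 < a \<and> 0 < b"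
  unfolding Ud gd by auto

lemma rt_from0: "(0, y) \<in> (U j)\<^sup>* \<Longrightarrow> y = 0"
  by (erule converse_rtranclE) (use U_pos in auto)

lemma rt_to0: "(x, 0) \<in> (U j)\<^sup>* \<Longrightarrow> x = 0"
  by (erule rtranclE) (use U_pos in auto)

lemma g_zero: "i < K \<Longrightarrow> (g i s = 0) = (lamB (ord i) s = 0)"
  unfolding gd by simp

lemma lab_zero:
  assumes "t \<in> TT" "odd_count t = j" "j \<in> {1,2}"
  shows "(lab t = 0) = (\<tau> t = 0)"
proof -
  obtain i where i: "i < K" "t \<in> Bk i" "lab t = rep j (g i t)" using lab12 assms by force
  have r: "\<forall>l l'. rep j l = rep j l' \<longleftrightarrow> (l, l') \<in> (U j)\<^sup>*" "\<forall>l. (l, rep j l) \<in> (U j)\<^sup>*" using repd assms(3) by auto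
  have "(rep j x = 0) = (x = 0)" for x
    using r(2)[rule_format, of x] rt_to0[of x j] r(2)[rule_format, of 0] rt_from0[of "rep j 0" j] by auto
  then have "(lab t = 0) = (lamB (ord i) t = 0)" using i g_zero by simp
  also have "\<dots> = (\<tau> t = 0)"
    using assms act1[OF goodi[OF i(1)] gT i(2)] act2[OF goodi[OF i(1)] gT i(2)] by auto
  finally show ?thesis .
qed

lemma lab_sound:
  assumes "t \<in> TT" "t' \<in> TT" "odd_count t = j" "odd_count t' = j" "j \<in> {1,2}" "lab t = lab t'"
  shows "\<tau> t = \<tau> t'"
proof -
  obtain i where i: "i < K" "t \<in> Bk i" "lab t = rep j (g i t)" using lab12 assms(1,3,5) by force
  obtain i' where i': "i' < K" "t' \<in> Bk i'" "lab t' = rep j (g i' t')" using lab12 assms(2,4,5) by force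
  have r: "\<forall>l l'. rep j l = rep j l' \<longleftrightarrow> (l, l') \<in> (U j)\<^sup>*" using repd assms(5) by auto
  have "rep j (g i t) = rep j (g i' t')" using i(3) i'(3) assms(6) by simp
  then have rt: "(g i t, g i' t') \<in> (U j)\<^sup>*" using r by blast
  show ?thesis
  proof (cases "lamB (ord i) t = 0")
    case True
    then have "g i t = 0" using g_zero[OF i(1)] by simp
    then have "g i' t' = 0" using rt rt_from0 by metis
    then have "lamB (ord i') t' = 0" using g_zero[OF i'(1)] by simp
    moreover have "(lamB (ord i) t = 0) = (\<tau> t = 0)" "(lamB (ord i') t' = 0) = (\<tau> t' = 0)"
      using assms(3-5) act1[OF goodi[OF i(1)] gT i(2)] act2[OF goodi[OF i(1)] gT i(2)]
        act1[OF goodi[OF i'(1)] gT i'(2)] act2[OF goodi[OF i'(1)] gT i'(2)] by auto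
    ultimately show ?thesis using True by simp
  next
    case False
    then have "g i t \<noteq> 0" using g_zero[OF i(1)] by simp
    then have "g i' t' \<noteq> 0" using rt rt_to0 by metis
    then have "lamB (ord i') t' \<noteq> 0" using g_zero[OF i'(1)] by simp
    then show ?thesis using U_sound[OF rt assms(5) i(1) i(2) assms(3) False refl i'(1) i'(2) assms(4) _ refl] by simp
  qed
qed

lemma lab_pos0:
  assumes "t \<in> TT" "odd_count t = 0" "\<tau> t \<noteq> 0"
  shows "lab t \<noteq> 0"
proof -
  obtain i where i: "i < K" "t \<in> Bk i" "lab t = g i t" using lab0 assms by blast
  note G = goodi[OF i(1)]
  let ?l = "lamB (ord i)"
  have "theta TT \<tau> t \<noteq> {}" using good_zero[OF gT assms(1,2)] assms(3) by simp
  then obtain x where x: "0 < x" "card {s \<in> Gamma TT t. \<tau> s = x} = 1" unfolding theta_def by auto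
  then obtain e where e: "{s \<in> Gamma TT t. \<tau> s = x} = {e}" using card_1_singletonE by blast
  have eG: "e \<in> Gamma TT t" and ex: "\<tau> e = x" using e by auto
  have eB: "e \<in> Bk i" and e1: "odd_count e = 1" using good_sub[OF G i(2)] eG Gamma_in[OF eG] assms(2) by auto
  have le: "?l e \<noteq> 0" using act1[OF G gT eB e1] ex x by simp
  have "{s \<in> Gamma TT t. ?l s = ?l e} = {e}"
  proof
    show "{s \<in> Gamma TT t. ?l s = ?l e} \<subseteq> {e}"
    proof
      fix s assume s: "s \<in> {s \<in> Gamma TT t. ?l s = ?l e}"
      then have sG: "s \<in> Gamma TT t" and sl: "?l s = ?l e" by auto
      have sB: "s \<in> Bk i" and s1: "odd_count s = 1" using good_sub[OF G i(2)] sG Gamma_in[OF sG] assms(2) by auto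
      have "\<tau> s = \<tau> e" using BS1[OF G gT sB eB s1 e1 _ sl] le sl by simp
      then have "s \<in> {s \<in> Gamma TT t. \<tau> s = x}" using sG ex by simp
      then show "s \<in> {e}" using e by simp
    qed
  qed (use eG in simp)
  then have "?l e \<in> theta TT ?l t" using le unfolding theta_def by simp
  then have "?l t \<noteq> 0" using good_zero[OF G i(2) assms(2)] by auto
  then show ?thesis using i(3) g_zero[OF i(1)] by simp
qed

definition J :: "(cell \<Rightarrow> nat) \<Rightarrow> bool" where
  "J c = ((\<forall>s. odd_count s = 2 \<longrightarrow> c s = lab s) \<and>
     (\<forall>e\<in>TT. odd_count e = 1 \<longrightarrow> (c e = 0) = (\<tau> e = 0)) \<and>
     (\<forall>e\<in>TT. \<forall>e'\<in>TT. odd_count e = 1 \<longrightarrow> odd_count e' = 1 \<longrightarrow> c e = c e' \<longrightarrow> \<tau> e = \<tau> e'))"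

lemma JD0: "J c \<Longrightarrow> odd_count s = 2 \<Longrightarrow> c s = lab s"
  unfolding J_def by blast
lemma JD1: "J c \<Longrightarrow> e \<in> TT \<Longrightarrow> odd_count e = 1 \<Longrightarrow> (c e = 0) = (\<tau> e = 0)"
  unfolding J_def by blast
lemma JD2: "J c \<Longrightarrow> e \<in> TT \<Longrightarrow> e' \<in> TT \<Longrightarrow> odd_count e = 1 \<Longrightarrow> odd_count e' = 1 \<Longrightarrow> c e = c e' \<Longrightarrow> \<tau> e = \<tau> e'"
  unfolding J_def by blast

lemma mpE:
  assumes "(l, l') \<in> merge_pairs TT c t0"
  obtains e e' where "l = c e" "l' = c e'" "e \<in> Gamma TT t0" "e' \<in> Gamma TT t0"
    "c e \<in> theta TT c t0" "c e' \<in> theta TT c t0" "c e \<noteq> c e'" "c ` Gamma TT e = c ` Gamma TT e'"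
  using assms unfolding merge_pairs_def mem_Collect_eq
  apply (elim exE conjE)
  subgoal for e e' by (rule that[of e e']) auto
  done

lemma J_lab: "J lab"
  unfolding J_def
proof (intro conjI allI ballI impI)
  fix s :: cell assume "odd_count s = 2" then show "lab s = lab s" by simp
next
  fix e assume "e \<in> TT" "odd_count e = 1" then show "(lab e = 0) = (\<tau> e = 0)" using lab_zero[of e 1] by simp
next
  fix e e' assume "e \<in> TT" "e' \<in> TT" "odd_count e = 1" "odd_count e' = 1" "lab e = lab e'"
  then show "\<tau> e = \<tau> e'" using lab_sound[of e e' 1] by simp
qed

lemma MS:
  assumes Jc: "J c" and t0: "t0 \<in> TT" "odd_count t0 = 0" and p: "(l, l') \<in> merge_pairs TT c t0"
  shows "\<exists>e e'. e \<in> Gamma TT t0 \<and> e' \<in> Gamma TT t0 \<and> l = c e \<and> l' = c e' \<and> \<tau> e = \<tau> e' \<and> 0 < l \<and> 0 < l'"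
proof -
  obtain e e' where ee: "l = c e" "l' = c e'" "e \<in> Gamma TT t0" "e' \<in> Gamma TT t0"
    "c e \<in> theta TT c t0" "c e' \<in> theta TT c t0" "c ` Gamma TT e = c ` Gamma TT e'"
    by (rule mpE[OF p])
  have eT: "e \<in> TT" "odd_count e = 1" using Gamma_in[OF ee(3)] t0 by auto
  have e'T: "e' \<in> TT" "odd_count e' = 1" using Gamma_in[OF ee(4)] t0 by auto
  have pos: "0 < c e" "0 < c e'" using ee(5,6) unfolding theta_def by auto
  have te: "\<tau> e \<noteq> 0" "\<tau> e' \<noteq> 0" using JD1[OF Jc eT] JD1[OF Jc e'T] pos by auto
  have ae: "theta TT \<tau> e \<noteq> {}" "theta TT \<tau> e' \<noteq> {}"
    using good_zero[OF gT eT] good_zero[OF gT e'T] te by auto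
  have inc: "\<tau> ` Gamma TT a - {0} \<subseteq> \<tau> ` Gamma TT b - {0}"
    if ab: "a \<in> TT" "b \<in> TT" "odd_count a = 1" "odd_count b = 1" "c ` Gamma TT a = c ` Gamma TT b" for a b
  proof
    fix z assume "z \<in> \<tau> ` Gamma TT a - {0}"
    then obtain s where sg: "s \<in> Gamma TT a" "\<tau> s = z" "z \<noteq> 0" by blast
    have sT: "s \<in> TT" "odd_count s = 2" using Gamma_in[OF sg(1)] ab(3) by auto
    have "c s \<in> c ` Gamma TT b" using ab(5) sg(1) by blast
    then obtain s' where s': "s' \<in> Gamma TT b" "c s' = c s" by (metis imageE)
    have s'T: "s' \<in> TT" "odd_count s' = 2" using Gamma_in[OF s'(1)] ab(4) by auto
    have "c s = lab s" "c s' = lab s'" using JD0[OF Jc sT(2)] JD0[OF Jc s'T(2)] by blast+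
    then have "lab s' = lab s" using s'(2) by metis
    then have "\<tau> s' = \<tau> s" using lab_sound[OF s'T(1) sT(1) s'T(2) sT(2)] by simp
    then have "z = \<tau> s'" using sg(2) by simp
    then show "z \<in> \<tau> ` Gamma TT b - {0}" using s'(1) sg(3) by blast
  qed
  have i1: "\<tau> ` Gamma TT e - {0} \<subseteq> \<tau> ` Gamma TT e' - {0}" by (rule inc[OF eT(1) e'T(1) eT(2) e'T(2) ee(7)])
  have i2: "\<tau> ` Gamma TT e' - {0} \<subseteq> \<tau> ` Gamma TT e - {0}" by (rule inc[OF e'T(1) eT(1) e'T(2) eT(2) ee(7)[symmetric]])
  have "theta TT \<tau> e = theta TT \<tau> e'"
    using good_theta1[OF gT eT ae(1)] good_theta1[OF gT e'T ae(2)] equalityI[OF i1 i2] by simp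
  moreover have "connected_cells TT e e'" unfolding connected_cells_def using t0(1) ee(3,4) by blast
  ultimately have "\<tau> e = \<tau> e'" using good_theta_eq[OF gT eT(1) e'T(1) eT(2) e'T(2) _ ae(1)] by simp
  then have "e \<in> Gamma TT t0 \<and> e' \<in> Gamma TT t0 \<and> l = c e \<and> l' = c e' \<and> \<tau> e = \<tau> e' \<and> 0 < l \<and> 0 < l'"
    using ee(1-4) pos by (intro conjI) simp_all
  then show ?thesis by blast
qed

lemma MS_rt:
  assumes Jc: "J c" and t0: "t0 \<in> TT" "odd_count t0 = 0" and rt: "(x, y) \<in> (merge_pairs TT c t0)\<^sup>*"
  shows "\<And>e e'. e \<in> TT \<Longrightarrow> e' \<in> TT \<Longrightarrow> odd_count e = 1 \<Longrightarrow> odd_count e' = 1 \<Longrightarrow> c e = x \<Longrightarrow> c e' = y \<Longrightarrow> \<tau> e = \<tau> e'"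
  using rt
proof (induction rule: rtrancl_induct)
  case base
  have "c e = c e'" using base.prems(5,6) by simp
  show ?case by (rule JD2[OF Jc base.prems(1-4) \<open>c e = c e'\<close>])
next
  case (step y z)
  obtain e1 e2 where m: "e1 \<in> Gamma TT t0" "e2 \<in> Gamma TT t0" "y = c e1" "z = c e2" "\<tau> e1 = \<tau> e2"
    using MS[OF Jc t0 step.hyps(2)] by blast
  have e1: "e1 \<in> TT" "odd_count e1 = 1" using Gamma_in[OF m(1)] t0 by auto
  have e2: "e2 \<in> TT" "odd_count e2 = 1" using Gamma_in[OF m(2)] t0 by auto
  have "\<tau> e = \<tau> e1" using step.IH[OF step.prems(1) e1(1) step.prems(3) e1(2) step.prems(5)] m(3) by simp
  moreover have "\<tau> e2 = \<tau> e'" using JD2[OF Jc e2(1) step.prems(2) e2(2) step.prems(4)] step.prems(6) m(4) by simp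
  ultimately show ?case using m(5) by simp
qed

lemma MP_pos: "(a, b) \<in> merge_pairs TT c t0 \<Longrightarrow> 0 < a \<and> 0 < b"
  by (erule mpE) (simp add: theta_def)

lemma step_J:
  assumes st: "step4_at TT c c' t0" and Jc: "J c" and t0: "t0 \<in> TT" "odd_count t0 = 0"
  shows "J c'" and "\<And>t. t \<in> TT \<Longrightarrow> odd_count t = 0 \<Longrightarrow> \<tau> t \<noteq> 0 \<Longrightarrow> c' t = c t"
proof -
  let ?R = "merge_pairs TT c t0"
  obtain \<rho> where r1: "\<forall>l l'. \<rho> l = \<rho> l' \<longleftrightarrow> (l, l') \<in> ?R\<^sup>*" and r2: "\<forall>l. (l, \<rho> l) \<in> ?R\<^sup>*"
    and c': "c' = (\<lambda>t. if t = t0 \<and> ?R \<noteq> {} \<and> theta TT (\<lambda>t. if odd_count t = 1 then \<rho> (c t) else c t) t0 = {} then 0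
                   else (\<lambda>t. if odd_count t = 1 then \<rho> (c t) else c t) t)"
    using st unfolding step4_at_def Let_def by blast
  define c1 where "c1 = (\<lambda>t. if odd_count t = 1 then \<rho> (c t) else c t)"
  have c'1: "c' t = (if t = t0 \<and> ?R \<noteq> {} \<and> theta TT c1 t0 = {} then 0 else c1 t)" for t
    using c' unfolding c1_def by simp
  have rf0: "(0, y) \<in> ?R\<^sup>* \<Longrightarrow> y = 0" for y by (erule converse_rtranclE) (auto dest: MP_pos)
  have rt0: "(x, 0) \<in> ?R\<^sup>* \<Longrightarrow> x = 0" for x by (erule rtranclE) (auto dest: MP_pos)
  have rho0: "(\<rho> x = 0) = (x = 0)" for x
    using r2[rule_format, of x] rt0[of x] r2[rule_format, of 0] rf0[of "\<rho> 0"] by auto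
  have c'ne: "c' s = c1 s" if "odd_count s \<noteq> 0" for s using that t0(2) c'1[of s] by auto

  show "J c'"
    unfolding J_def
  proof (intro conjI ballI allI impI)
    fix s assume "odd_count s = 2"
    then show "c' s = lab s" using c'ne[of s] JD0[OF Jc] unfolding c1_def by simp
  next
    fix e assume "e \<in> TT" "odd_count e = 1"
    then show "(c' e = 0) = (\<tau> e = 0)" using c'ne[of e] JD1[OF Jc] rho0 unfolding c1_def by simp
  next
    fix e e' assume a: "e \<in> TT" "e' \<in> TT" "odd_count e = 1" "odd_count e' = 1" "c' e = c' e'"
    then have "\<rho> (c e) = \<rho> (c e')" using c'ne[of e] c'ne[of e'] unfolding c1_def by simp
    then have "(c e, c e') \<in> ?R\<^sup>*" using r1 by blast
    then show "\<tau> e = \<tau> e'" using MS_rt[OF Jc t0 _ a(1,2,3,4) refl refl] by simp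
  qed
  fix t assume tT: "t \<in> TT" and t0c: "odd_count t = 0" and tn: "\<tau> t \<noteq> 0"
  show "c' t = c t"
  proof (cases "t = t0")
    case False
    then show ?thesis using c'1[of t] t0c unfolding c1_def by simp
  next
    case True
    have "theta TT \<tau> t \<noteq> {}" using good_zero[OF gT tT t0c] tn by simp
    then obtain x where x: "0 < x" "card {s \<in> Gamma TT t. \<tau> s = x} = 1" unfolding theta_def by auto
    then obtain e where e: "{s \<in> Gamma TT t. \<tau> s = x} = {e}" using card_1_singletonE by blast
    have eG: "e \<in> Gamma TT t" and ex: "\<tau> e = x" using e by auto
    have eT: "e \<in> TT" "odd_count e = 1" using Gamma_in[OF eG] t0c by auto
    have uniq: "e'' = e" if "e'' \<in> Gamma TT t" "\<tau> e'' = \<tau> e" for e''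
      using that e ex by blast
    have ce: "c e \<noteq> 0" using JD1[OF Jc eT] ex x by auto
    have cuniq: "e'' = e" if "e'' \<in> Gamma TT t" "c e'' = c e" for e''
    proof -
      have "e'' \<in> TT" "odd_count e'' = 1" using Gamma_in[OF that(1)] t0c by auto
      then show ?thesis using JD2[OF Jc _ eT(1) _ eT(2) that(2)] uniq that(1) by blast
    qed
    have notin: "\<not> (\<exists>b. (c e, b) \<in> ?R) \<and> \<not> (\<exists>a. (a, c e) \<in> ?R)"
    proof -
      have "False" if ab: "(a, b) \<in> ?R" "a = c e \<or> b = c e" for a b
      proof -
        obtain e1 e2 where m: "e1 \<in> Gamma TT t0" "e2 \<in> Gamma TT t0" "a = c e1" "b = c e2" "\<tau> e1 = \<tau> e2"
          using MS[OF Jc t0 ab(1)] by blast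
        have "a \<noteq> b" using ab(1) by (rule mpE) simp
        have "e1 = e \<or> e2 = e" using ab(2) m cuniq True by metis
        then have "e1 = e \<and> e2 = e" using uniq m True by metis
        then show False using \<open>a \<noteq> b\<close> m by simp
      qed
      then show ?thesis by blast
    qed
    have rce: "\<rho> (c e) = c e"
      using r2[rule_format, of "c e"] notin by (auto elim: converse_rtranclE)
    have "{s \<in> Gamma TT t. c1 s = c e} = {e}"
    proof
      show "{s \<in> Gamma TT t. c1 s = c e} \<subseteq> {e}"
      proof
        fix s assume "s \<in> {s \<in> Gamma TT t. c1 s = c e}"
        then have sG: "s \<in> Gamma TT t" and sc: "c1 s = c e" by auto
        have s1: "odd_count s = 1" using Gamma_in[OF sG] t0c by auto
        then have "\<rho> (c s) = \<rho> (c e)" using sc rce unfolding c1_def by simp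
        then have "(c s, c e) \<in> ?R\<^sup>*" using r1 by blast
        then have "c s = c e" using notin by (auto elim: rtranclE)
        then show "s \<in> {e}" using cuniq sG by blast
      qed
    next
      show "{e} \<subseteq> {s \<in> Gamma TT t. c1 s = c e}" using eG eT(2) rce unfolding c1_def by simp
    qed
    then have "c e \<in> theta TT c1 t" using ce unfolding theta_def by simp
    then have "theta TT c1 t0 \<noteq> {}" using True by auto
    then show ?thesis using c'1[of t] True t0c unfolding c1_def by simp
  qed
qed

lemma steps_inv:
  assumes ts: "set ts \<subseteq> {t \<in> TT. odd_count t = 0}" and c0: "cs 0 = lab"
    and st: "\<forall>i < length ts. step4_at TT (cs i) (cs (Suc i)) (ts ! i)"
  shows "i \<le> length ts \<Longrightarrow> J (cs i) \<and> (\<forall>t\<in>TT. odd_count t = 0 \<longrightarrow> \<tau> t \<noteq> 0 \<longrightarrow> cs i t = lab t)"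
proof (induction i)
  case 0
  then show ?case using J_lab c0 by simp
next
  case (Suc i)
  then have IH: "J (cs i)" "\<forall>t\<in>TT. odd_count t = 0 \<longrightarrow> \<tau> t \<noteq> 0 \<longrightarrow> cs i t = lab t" and il: "i < length ts" by auto
  have t0: "ts ! i \<in> TT" "odd_count (ts ! i) = 0" using ts nth_mem[OF il] by auto
  have s: "step4_at TT (cs i) (cs (Suc i)) (ts ! i)" using st il by blast
  show ?case using step_J[OF s IH(1) t0] IH(2) by simp
qed

lemma final:
  assumes ts: "set ts \<subseteq> {t \<in> TT. odd_count t = 0}" and c0: "cs 0 = lab"
    and st: "\<forall>i < length ts. step4_at TT (cs i) (cs (Suc i)) (ts ! i)"
  shows "\<forall>t \<in> TT. odd_count t = 0 \<longrightarrow> \<tau> t \<noteq> 0 \<longrightarrow> cs (length ts) t \<noteq> 0"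
  using steps_inv[OF ts c0 st, of "length ts"] lab_pos0 by simp

end


lemma bwE:
  assumes "blockwise_output n1 n2 n3 \<sigma> a1 a2 a3 \<tau>'"
  obtains ord lamB mB rep lab ts cs K off g U where
    "bij_betw ord {..<(K::nat)} (block_indices a1 a2 a3)"
    "\<forall>k\<in>block_indices a1 a2 a3. is_LABEL (Tgrid n1 n2 n3) \<sigma> (blk a1 a2 a3 k) (lamB k) (mB k)"
    "off = (\<lambda>j i. \<Sum>i'<i. mB (ord i') j)"
    "g = (\<lambda>i t. if lamB (ord i) t = 0 then 0 else lamB (ord i) t + off (odd_count t) i)"
    "U = (\<lambda>j. {(g i t, g i' t) | i i' t. i < K \<and> i' < K \<and>
                   t \<in> blk a1 a2 a3 (ord i) \<and> t \<in> blk a1 a2 a3 (ord i') \<and> odd_count t = j \<and>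
                   lamB (ord i) t \<noteq> 0 \<and> lamB (ord i') t \<noteq> 0})"
    "\<forall>j\<in>{1,2}. (\<forall>l l'. rep j l = rep j l' \<longleftrightarrow> (l, l') \<in> (U j)\<^sup>*) \<and> (\<forall>l. (l, rep j l) \<in> (U j)\<^sup>*)"
    "\<forall>t\<in>Tgrid n1 n2 n3. odd_count t = 0 \<longrightarrow> (\<exists>i<K. t \<in> blk a1 a2 a3 (ord i) \<and> lab t = g i t)"
    "\<forall>t\<in>Tgrid n1 n2 n3. odd_count t \<in> {1,2} \<longrightarrow> (\<exists>i<K. t \<in> blk a1 a2 a3 (ord i) \<and> lab t = rep (odd_count t) (g i t))"
    "set ts = {t \<in> Tgrid n1 n2 n3. odd_count t = 0}" "cs 0 = lab"
    "\<forall>i < length ts. step4_at (Tgrid n1 n2 n3) (cs i) (cs (Suc i)) (ts ! i)"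
    "\<tau>' = cs (length ts)"
  using assms unfolding blockwise_output_def Let_def
  apply (elim exE conjE)
  subgoal for ord lamB mB rep lab ts cs
    apply (rule that[of ord "card (block_indices a1 a2 a3)" lamB mB "\<lambda>j i. \<Sum>i'<i. mB (ord i') j"
       "\<lambda>i t. if lamB (ord i) t = 0 then 0 else lamB (ord i) t + (\<Sum>i'<i. mB (ord i') (odd_count t))"])
    apply (assumption | rule refl)+
    done
  done

theorem proposition6:
  fixes n1 n2 n3 :: nat
    and \<sigma> \<tau> \<tau>' :: "cell \<Rightarrow> nat"
    and mT :: "nat \<Rightarrow> nat"
    and a1 a2 a3 :: "nat list"
  assumes "1 \<le> n1" and "1 \<le> n2" and "1 \<le> n3"
    and "segment_label_map n1 n2 n3 \<sigma>"
    and "valid_axis n1 a1" and "valid_axis n2 a2" and "valid_axis n3 a3"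
    and "is_LABEL (Tgrid n1 n2 n3) \<sigma> (Tgrid n1 n2 n3) \<tau> mT"
    and "blockwise_output n1 n2 n3 \<sigma> a1 a2 a3 \<tau>'"
  shows "\<forall>t \<in> Tgrid n1 n2 n3. odd_count t = 0 \<longrightarrow> \<tau> t \<noteq> 0 \<longrightarrow> \<tau>' t \<noteq> 0"
proof -
  interpret grid n1 n2 n3 \<sigma> by unfold_locales (rule assms)+
  have gT: "good (Tgrid n1 n2 n3) \<tau> mT" unfolding good_def using assms(8) oddbox_T[OF assms(1-3)] by simp
  obtain ord lamB mB rep lab ts cs K off g U where
    H: "bij_betw ord {..<(K::nat)} (block_indices a1 a2 a3)"
    "\<forall>k\<in>block_indices a1 a2 a3. is_LABEL (Tgrid n1 n2 n3) \<sigma> (blk a1 a2 a3 k) (lamB k) (mB k)"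
    "off = (\<lambda>j i. \<Sum>i'<i. mB (ord i') j)"
    "g = (\<lambda>i t. if lamB (ord i) t = 0 then 0 else lamB (ord i) t + off (odd_count t) i)"
    "U = (\<lambda>j. {(g i t, g i' t) | i i' t. i < K \<and> i' < K \<and>
                   t \<in> blk a1 a2 a3 (ord i) \<and> t \<in> blk a1 a2 a3 (ord i') \<and> odd_count t = j \<and>
                   lamB (ord i) t \<noteq> 0 \<and> lamB (ord i') t \<noteq> 0})"
    "\<forall>j\<in>{1,2}. (\<forall>l l'. rep j l = rep j l' \<longleftrightarrow> (l, l') \<in> (U j)\<^sup>*) \<and> (\<forall>l. (l, rep j l) \<in> (U j)\<^sup>*)"
    "\<forall>t\<in>Tgrid n1 n2 n3. odd_count t = 0 \<longrightarrow> (\<exists>i<K. t \<in> blk a1 a2 a3 (ord i) \<and> lab t = g i t)"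
    "\<forall>t\<in>Tgrid n1 n2 n3. odd_count t \<in> {1,2} \<longrightarrow> (\<exists>i<K. t \<in> blk a1 a2 a3 (ord i) \<and> lab t = rep (odd_count t) (g i t))"
    "set ts = {t \<in> Tgrid n1 n2 n3. odd_count t = 0}" "cs 0 = lab"
    "\<forall>i < length ts. step4_at (Tgrid n1 n2 n3) (cs i) (cs (Suc i)) (ts ! i)"
    "\<tau>' = cs (length ts)"
    by (rule bwE[OF assms(9)])
  interpret bw n1 n2 n3 \<sigma> \<tau> mT a1 a2 a3 ord lamB mB rep lab K off g U
    by unfold_locales (rule gT assms(5-7) H(1-8))+
  show ?thesis using final[OF _ H(10) H(11)] H(9) H(12) by simp
qed

end
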